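(* Let $\rho^0\in\Lambda^*(x_0)$. Then $\rho^0$ is the outcome of a subgame perfect equilibrium in $(\mathcal{X},x_0)$.
   Context: Games: an arena $G=(\Pi,V,(V_i)_{i\in\Pi},E)$ has finite player set $\Pi$, finite vertex set $V$ ($|V|\ge2$, $|\Pi|\le|V|$), partition $(V_i)$ and edges $E$ with every vertex having a successor. A quantitative reachability game has targets $F_i\subseteq V$ and $\mathrm{Cost}_i(\rho)=$ least $k$ with $\rho_k\in F_i$ (or $+\infty$). Strategies map histories ending in $V_i$ to successors; a profile $\sigma$ has outcome $\langle\sigma\rangle_{v_0}$. $\sigma$ is a Nash equilibrium if no player can strictly decrease his cost of the outcome by unilaterally changing his strategy; it is a subgame perfect equilibrium if for every history $hv$ from the initial vertex, $\sigma_{|h}$ ($\sigma_{i|h}(h')=\sigma_i(hh')$) is a Nash equilibrium in the game from $v$ with costs $\rho\mapsto\mathrm{Cost}_i(h\rho)$. Extended game of $(\mathcal{G},v_0)$: $\mathcal{X}$ is the reachability game on arena $X$ with $V^X=V\times2^\Pi$, $((v,I),(v',I'))\in E^X$ iff $(v,v')\in E$ and $I'=I\cup\{i:v'\in F_i\}$, $(v,I)\in V^X_i$ iff $v\in V_i$, targets $F^X_i=\{(v,I):i\in I\}$; $x_0=(v_0,\{i:v_0\in F_i\})$. $I(u)$ is the second component of $u$. $\mathcal{I}$ is the set of $I$ with some $(v,I)$ reachable from $x_0$, $N=|\mathcal{I}|$, and $J_1<\dots<J_N$ a fixed total order of $\mathcal{I}$ extending $I<I'$ iff $I\ne I'$ and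 some $(v',I')$ is reachable from some $(v,I)$. $V^{\ge J_n}=\{(v,J_m):v\in V,m\ge n\}$. Labelings: for $\lambda:V^X\to\mathbb{N}\cup\{+\infty\}$, a play $\rho$ of $X$ is $\lambda$-consistent if $\mathrm{Cost}_i(\rho_{\ge n})\le\lambda(\rho_n)$ for all $n$ and $i$ with $\rho_n\in V^X_i$. $\lambda^0(u)=0$ if $u\in V^X_i$ and $i\in I(u)$, else $+\infty$. The update of $\lambda^k$ w.r.t. $V^{\ge J_n}$ keeps values outside $V^{\ge J_n}$ and for $u\in V^{\ge J_n}\cap V^X_i$ sets $\lambda^{k+1}(u)=0$ if $i\in I(u)$, otherwise $1+\min_{(u,u')\in E^X}\sup\{\mathrm{Cost}_i(\rho):\rho\in\Lambda^k(u')\}$, $\Lambda^k(u')$ being the $\lambda^k$-consistent plays from $u'$ and $1+(+\infty)=+\infty$. The sequence is generated by $n_0=N$, $\lambda^{k+1}=$ update of $\lambda^k$ w.r.t. $V^{\ge J_{n_k}}$, $n_{k+1}=n_k-1$ if $\lambda^{k+1}=\lambda^k$ and $n_k>1$, else $n_{k+1}=n_k$. It eventually becomes constant, equal to $\lambda^*$; $\Lambda^*(v)$ is the set of $\lambda^*$-consistent plays from $v$. *)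

theory Defs
  imports Main "HOL-Library.Extended_Nat"
begin

definition arena :: "'p set \<Rightarrow> 'v set \<Rightarrow> ('v \<Rightarrow> 'p) \<Rightarrow> ('v \<times> 'v) set \<Rightarrow> bool" where
  "arena Pl V own E \<longleftrightarrow> finite Pl \<and> finite V \<and> card V \<ge> 2 \<and> card Pl \<le> card V
     \<and> (\<forall>v\<in>V. own v \<in> Pl) \<and> E \<subseteq> V \<times> V \<and> (\<forall>v\<in>V. \<exists>v'. (v, v') \<in> E)"

definition is_play :: "'a set \<Rightarrow> ('a \<times> 'a) set \<Rightarrow> (nat \<Rightarrow> 'a) \<Rightarrow> bool" where
  "is_play V E \<rho> \<longleftrightarrow> (\<forall>n. \<rho> n \<in> V \<and> (\<rho> n, \<rho> (Suc n)) \<in> E)"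

definition is_history :: "'a set \<Rightarrow> ('a \<times> 'a) set \<Rightarrow> 'a list \<Rightarrow> bool" where
  "is_history V E h \<longleftrightarrow> h \<noteq> [] \<and> set h \<subseteq> V \<and> (\<forall>k. Suc k < length h \<longrightarrow> (h ! k, h ! Suc k) \<in> E)"

definition cost :: "'a set \<Rightarrow> (nat \<Rightarrow> 'a) \<Rightarrow> enat" where
  "cost T \<rho> = (if \<exists>k. \<rho> k \<in> T then enat (LEAST k. \<rho> k \<in> T) else \<infinity>)"

definition prepend :: "'a list \<Rightarrow> (nat \<Rightarrow> 'a) \<Rightarrow> (nat \<Rightarrow> 'a)" where
  "prepend h \<rho> = (\<lambda>n. if n < length h then h ! n else \<rho> (n - length h))"

definition suffix_from :: "nat \<Rightarrow> (nat \<Rightarrow> 'a) \<Rightarrow> (nat \<Rightarrow> 'a)" where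
  "suffix_from n \<rho> = (\<lambda>k. \<rho> (n + k))"

definition is_strategy :: "'a set \<Rightarrow> ('a \<Rightarrow> 'p) \<Rightarrow> ('a \<times> 'a) set \<Rightarrow> 'p \<Rightarrow> ('a list \<Rightarrow> 'a) \<Rightarrow> bool" where
  "is_strategy V own E i s \<longleftrightarrow>
     (\<forall>h. is_history V E h \<and> own (last h) = i \<longrightarrow> (last h, s h) \<in> E)"

definition is_profile :: "'p set \<Rightarrow> 'a set \<Rightarrow> ('a \<Rightarrow> 'p) \<Rightarrow> ('a \<times> 'a) set \<Rightarrow> ('p \<Rightarrow> 'a list \<Rightarrow> 'a) \<Rightarrow> bool" where
  "is_profile Pl V own E \<sigma> \<longleftrightarrow> (\<forall>i\<in>Pl. is_strategy V own E i (\<sigma> i))"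

fun out_hist :: "('a \<Rightarrow> 'p) \<Rightarrow> ('p \<Rightarrow> 'a list \<Rightarrow> 'a) \<Rightarrow> 'a \<Rightarrow> nat \<Rightarrow> 'a list" where
  "out_hist own \<sigma> v 0 = [v]"
| "out_hist own \<sigma> v (Suc n) = (let h = out_hist own \<sigma> v n in h @ [\<sigma> (own (last h)) h])"

definition outcome :: "('a \<Rightarrow> 'p) \<Rightarrow> ('p \<Rightarrow> 'a list \<Rightarrow> 'a) \<Rightarrow> 'a \<Rightarrow> (nat \<Rightarrow> 'a)" where
  "outcome own \<sigma> v = (\<lambda>n. last (out_hist own \<sigma> v n))"

definition is_NE :: "'p set \<Rightarrow> 'a set \<Rightarrow> ('a \<Rightarrow> 'p) \<Rightarrow> ('a \<times> 'a) set \<Rightarrow> ('p \<Rightarrow> 'a list \<Rightarrow> 'a) \<Rightarrow> 'a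
     \<Rightarrow> ('p \<Rightarrow> (nat \<Rightarrow> 'a) \<Rightarrow> enat) \<Rightarrow> bool" where
  "is_NE Pl V own E \<sigma> v c \<longleftrightarrow>
     (\<forall>i\<in>Pl. \<forall>\<tau>. is_strategy V own E i \<tau> \<longrightarrow>
        c i (outcome own \<sigma> v) \<le> c i (outcome own (\<sigma>(i := \<tau>)) v))"

definition is_SPE :: "'p set \<Rightarrow> 'a set \<Rightarrow> ('a \<Rightarrow> 'p) \<Rightarrow> ('a \<times> 'a) set \<Rightarrow> ('p \<Rightarrow> 'a set)
     \<Rightarrow> ('p \<Rightarrow> 'a list \<Rightarrow> 'a) \<Rightarrow> 'a \<Rightarrow> bool" where
  "is_SPE Pl V own E F \<sigma> v0 \<longleftrightarrow>
     (\<forall>h v. is_history V E (h @ [v]) \<and> hd (h @ [v]) = v0 \<longrightarrow>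
        is_NE Pl V own E (\<lambda>i h'. \<sigma> i (h @ h')) v (\<lambda>i \<rho>. cost (F i) (prepend h \<rho>)))"

definition VertX :: "'v set \<Rightarrow> 'p set \<Rightarrow> ('v \<times> 'p set) set" where
  "VertX V Pl = V \<times> Pow Pl"

definition EdgX :: "'p set \<Rightarrow> ('v \<times> 'v) set \<Rightarrow> ('p \<Rightarrow> 'v set) \<Rightarrow> (('v \<times> 'p set) \<times> ('v \<times> 'p set)) set" where
  "EdgX Pl E F = {((v, I), (v', I')). (v, v') \<in> E \<and> I \<subseteq> Pl \<and> I' = I \<union> {i \<in> Pl. v' \<in> F i}}"

definition ownX :: "('v \<Rightarrow> 'p) \<Rightarrow> ('v \<times> 'p set) \<Rightarrow> 'p" where
  "ownX own u = own (fst u)"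

definition FX :: "'v set \<Rightarrow> 'p set \<Rightarrow> 'p \<Rightarrow> ('v \<times> 'p set) set" where
  "FX V Pl i = {u \<in> VertX V Pl. i \<in> snd u}"

definition x0 :: "'p set \<Rightarrow> ('p \<Rightarrow> 'v set) \<Rightarrow> 'v \<Rightarrow> 'v \<times> 'p set" where
  "x0 Pl F v0 = (v0, {i \<in> Pl. v0 \<in> F i})"

definition calI :: "'p set \<Rightarrow> ('v \<times> 'v) set \<Rightarrow> ('p \<Rightarrow> 'v set) \<Rightarrow> 'v \<Rightarrow> 'p set set" where
  "calI Pl E F v0 = {I. \<exists>v. (x0 Pl F v0, (v, I)) \<in> (EdgX Pl E F)\<^sup>*}"

text \<open>J 1 < ... < J N is an enumeration of \<I> (N = card \<I>) which is a total order
  extending I < I' iff I \<noteq> I' and some (v',I') is reachable from some (v,I).\<close>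
definition admissible_order :: "'p set \<Rightarrow> ('v \<times> 'v) set \<Rightarrow> ('p \<Rightarrow> 'v set) \<Rightarrow> 'v \<Rightarrow> (nat \<Rightarrow> 'p set) \<Rightarrow> bool" where
  "admissible_order Pl E F v0 J \<longleftrightarrow>
     bij_betw J {1..card (calI Pl E F v0)} (calI Pl E F v0) \<and>
     (\<forall>m\<in>{1..card (calI Pl E F v0)}. \<forall>n\<in>{1..card (calI Pl E F v0)}.
        J m \<noteq> J n \<and> (\<exists>v v'. ((v, J m), (v', J n)) \<in> (EdgX Pl E F)\<^sup>*) \<longrightarrow> m < n)"

definition Vge :: "'v set \<Rightarrow> (nat \<Rightarrow> 'p set) \<Rightarrow> nat \<Rightarrow> nat \<Rightarrow> ('v \<times> 'p set) set" where
  "Vge V J N n = {(v, J m) | v m. v \<in> V \<and> n \<le> m \<and> m \<le> N}"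

definition Lam :: "'p set \<Rightarrow> 'v set \<Rightarrow> ('v \<Rightarrow> 'p) \<Rightarrow> ('v \<times> 'v) set \<Rightarrow> ('p \<Rightarrow> 'v set)
     \<Rightarrow> ('v \<times> 'p set \<Rightarrow> enat) \<Rightarrow> 'v \<times> 'p set \<Rightarrow> (nat \<Rightarrow> 'v \<times> 'p set) set" where
  "Lam Pl V own E F lam u = {\<rho>. is_play (VertX V Pl) (EdgX Pl E F) \<rho> \<and> \<rho> 0 = u \<and>
     (\<forall>n. cost (FX V Pl (ownX own (\<rho> n))) (suffix_from n \<rho>) \<le> lam (\<rho> n))}"

definition lam0 :: "('v \<Rightarrow> 'p) \<Rightarrow> 'v \<times> 'p set \<Rightarrow> enat" where
  "lam0 own u = (if ownX own u \<in> snd u then 0 else \<infinity>)"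

definition lam_update :: "'p set \<Rightarrow> 'v set \<Rightarrow> ('v \<Rightarrow> 'p) \<Rightarrow> ('v \<times> 'v) set \<Rightarrow> ('p \<Rightarrow> 'v set)
     \<Rightarrow> (nat \<Rightarrow> 'p set) \<Rightarrow> nat \<Rightarrow> ('v \<times> 'p set \<Rightarrow> enat) \<Rightarrow> nat \<Rightarrow> ('v \<times> 'p set \<Rightarrow> enat)" where
  "lam_update Pl V own E F J N lam n = (\<lambda>u.
     if u \<in> Vge V J N n then
       (if ownX own u \<in> snd u then 0
        else 1 + (INF u'\<in>{u'. (u, u') \<in> EdgX Pl E F}.
                    SUP \<rho>\<in>Lam Pl V own E F lam u'. cost (FX V Pl (ownX own u)) \<rho>))
     else lam u)"

fun lam_seq :: "'p set \<Rightarrow> 'v set \<Rightarrow> ('v \<Rightarrow> 'p) \<Rightarrow> ('v \<times> 'v) set \<Rightarrow> ('p \<Rightarrow> 'v set) \<Rightarrow> 'v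
     \<Rightarrow> (nat \<Rightarrow> 'p set) \<Rightarrow> nat \<Rightarrow> ('v \<times> 'p set \<Rightarrow> enat) \<times> nat" where
  "lam_seq Pl V own E F v0 J 0 = (lam0 own, card (calI Pl E F v0))"
| "lam_seq Pl V own E F v0 J (Suc k) =
     (let (l, n) = lam_seq Pl V own E F v0 J k;
          l' = lam_update Pl V own E F J (card (calI Pl E F v0)) l n
      in (l', if l' = l \<and> n > 1 then n - 1 else n))"

definition lam_star :: "'p set \<Rightarrow> 'v set \<Rightarrow> ('v \<Rightarrow> 'p) \<Rightarrow> ('v \<times> 'v) set \<Rightarrow> ('p \<Rightarrow> 'v set) \<Rightarrow> 'v
     \<Rightarrow> (nat \<Rightarrow> 'p set) \<Rightarrow> ('v \<times> 'p set \<Rightarrow> enat)" where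
  "lam_star Pl V own E F v0 J =
     (THE l. \<exists>K. \<forall>k\<ge>K. fst (lam_seq Pl V own E F v0 J k) = l)"

definition Lam_star :: "'p set \<Rightarrow> 'v set \<Rightarrow> ('v \<Rightarrow> 'p) \<Rightarrow> ('v \<times> 'v) set \<Rightarrow> ('p \<Rightarrow> 'v set) \<Rightarrow> 'v
     \<Rightarrow> (nat \<Rightarrow> 'p set) \<Rightarrow> 'v \<times> 'p set \<Rightarrow> (nat \<Rightarrow> 'v \<times> 'p set) set" where
  "Lam_star Pl V own E F v0 J = Lam Pl V own E F (lam_star Pl V own E F v0 J)"

end

theory Submission
  imports Defs "HOL-Library.FuncSet"
begin

fun extH :: "('a \<Rightarrow> 'p) \<Rightarrow> ('p \<Rightarrow> 'a list \<Rightarrow> 'a) \<Rightarrow> 'a list \<Rightarrow> nat \<Rightarrow> 'a list" where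
  "extH o' \<sigma> g 0 = g"
| "extH o' \<sigma> g (Suc n) = extH o' \<sigma> g n @ [\<sigma> (o' (last (extH o' \<sigma> g n))) (extH o' \<sigma> g n)]"

definition cont :: "('a \<Rightarrow> 'p) \<Rightarrow> ('p \<Rightarrow> 'a list \<Rightarrow> 'a) \<Rightarrow> 'a list \<Rightarrow> nat \<Rightarrow> 'a" where
  "cont o' \<sigma> g = (\<lambda>k. extH o' \<sigma> g k ! k)"

lemma ext_length[simp]: "length (extH o' \<sigma> g n) = length g + n"
  by (induction n) auto

lemma ext_ne[simp]: "g \<noteq> [] \<Longrightarrow> extH o' \<sigma> g n \<noteq> []"
  by (induction n) auto

lemma ext_prefix: "m \<le> n \<Longrightarrow> take (length g + m) (extH o' \<sigma> g n) = extH o' \<sigma> g m"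
proof (induction n)
  case 0 then show ?case by simp
next
  case (Suc n)
  show ?case
  proof (cases "m = Suc n")
    case True then show ?thesis by simp
  next
    case False
    then have "m \<le> n" using Suc by simp
    then show ?thesis using Suc by simp
  qed
qed

lemma ext_nth: "k < length g + m \<Longrightarrow> m \<le> n \<Longrightarrow> extH o' \<sigma> g n ! k = extH o' \<sigma> g m ! k"
proof -
  assume a: "k < length g + m" "m \<le> n"
  have "extH o' \<sigma> g m ! k = take (length g + m) (extH o' \<sigma> g n) ! k" using ext_prefix[OF a(2), where g=g and o'=o' and \<sigma>=\<sigma>] by simp
  also have "\<dots> = extH o' \<sigma> g n ! k" using a by simp
  finally show ?thesis by simp
qed

lemma ext_ext: "extH o' \<sigma> (extH o' \<sigma> g m) n = extH o' \<sigma> g (m + n)"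
  by (induction n) auto

lemma cont_ext_nth: "g \<noteq> [] \<Longrightarrow> k < length g + n \<Longrightarrow> extH o' \<sigma> g n ! k = cont o' \<sigma> g k"
  unfolding cont_def
  by (cases "k \<le> n") (auto intro: ext_nth[symmetric] ext_nth)

lemma cont_ext_nth': "g \<noteq> [] \<Longrightarrow> k < length g + n \<Longrightarrow> cont o' \<sigma> g k = extH o' \<sigma> g n ! k"
  using cont_ext_nth by metis

lemma cont_init: "k < length g \<Longrightarrow> cont o' \<sigma> g k = g ! k"
  using cont_ext_nth'[of g k 0 o' \<sigma>] by (cases g) auto

lemma ext_map: "g \<noteq> [] \<Longrightarrow> extH o' \<sigma> g n = map (cont o' \<sigma> g) [0..<length g + n]"
  by (rule nth_equalityI) (auto simp: cont_ext_nth)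

lemma cont_cont: "g \<noteq> [] \<Longrightarrow> cont o' \<sigma> (extH o' \<sigma> g m) = cont o' \<sigma> g"
proof
  fix k assume g: "g \<noteq> []"
  have "cont o' \<sigma> (extH o' \<sigma> g m) k = extH o' \<sigma> (extH o' \<sigma> g m) (Suc k) ! k"
    using g by (intro cont_ext_nth') auto
  also have "\<dots> = extH o' \<sigma> g (m + Suc k) ! k" by (simp add: ext_ext)
  also have "\<dots> = cont o' \<sigma> g k" using g by (intro cont_ext_nth) auto
  finally show "cont o' \<sigma> (extH o' \<sigma> g m) k = cont o' \<sigma> g k" .
qed

lemma cont_snoc: "g \<noteq> [] \<Longrightarrow> cont o' \<sigma> (g @ [\<sigma> (o' (last g)) g]) = cont o' \<sigma> g"
  using cont_cont[of g o' \<sigma> 1] by simp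

lemma last_ext: "g \<noteq> [] \<Longrightarrow> last (extH o' \<sigma> g n) = cont o' \<sigma> g (length g - 1 + n)"
  proof -
  assume g: "g \<noteq> []"
  then have "last (extH o' \<sigma> g n) = extH o' \<sigma> g n ! (length g - 1 + n)"
    by (cases g) (auto simp: last_conv_nth)
  then show ?thesis using g by (simp add: cont_ext_nth)
qed

lemma cont_next: "g \<noteq> [] \<Longrightarrow> cont o' \<sigma> g (length g + n) = \<sigma> (o' (last (extH o' \<sigma> g n))) (extH o' \<sigma> g n)"
  using cont_ext_nth'[of g "length g + n" "Suc n"] by (simp add: nth_append)

lemma out_hist_ext: "out_hist o' \<sigma> v n = extH o' \<sigma> [v] n"
  by (induction n) (auto simp: Let_def)

lemma outcome_cont: "outcome o' \<sigma> v = cont o' \<sigma> [v]"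
  by (rule ext) (simp add: outcome_def out_hist_ext last_conv_nth cont_def)

lemma ext_restr: "extH o' (\<lambda>i h'. \<sigma> i (h @ h')) [v] n = drop (length h) (extH o' \<sigma> (h @ [v]) n)"
proof (induction n)
  case 0 then show ?case by simp
next
  case (Suc n)
  have eq: "extH o' \<sigma> (h @ [v]) n = h @ extH o' (\<lambda>i h'. \<sigma> i (h @ h')) [v] n"
  proof -
    have "take (length h) (extH o' \<sigma> (h @ [v]) n) = h"
    proof -
      have t: "take (Suc (length h)) (extH o' \<sigma> (h @ [v]) n) = h @ [v]"
        using ext_prefix[of 0 n "h@[v]" o' \<sigma>] by simp
      have "take (length h) (extH o' \<sigma> (h @ [v]) n) = take (length h) (take (Suc (length h)) (extH o' \<sigma> (h @ [v]) n))" by simp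
      then show ?thesis using t by simp
    qed
    then show ?thesis using Suc by (metis append_take_drop_id)
  qed
  have ne: "extH o' (\<lambda>i h'. \<sigma> i (h @ h')) [v] n \<noteq> []" by simp
  show ?case by (simp add: eq ne)
qed

lemma cont_restr: "cont o' \<sigma> (h @ [v]) = prepend h (outcome o' (\<lambda>i h'. \<sigma> i (h @ h')) v)"
proof
  fix k
  show "cont o' \<sigma> (h @ [v]) k = prepend h (outcome o' (\<lambda>i h'. \<sigma> i (h @ h')) v) k"
  proof (cases "k < length h")
    case True then show ?thesis by (simp add: prepend_def cont_init nth_append)
  next
    case False
    have "outcome o' (\<lambda>i h'. \<sigma> i (h @ h')) v (k - length h)
        = drop (length h) (extH o' \<sigma> (h @ [v]) (k - length h)) ! (k - length h)"
      by (simp add: outcome_cont cont_def ext_restr)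
    also have "\<dots> = extH o' \<sigma> (h @ [v]) (k - length h) ! k" using False by simp
    also have "\<dots> = cont o' \<sigma> (h @ [v]) k" using False by (intro cont_ext_nth) auto
    finally show ?thesis using False by (simp add: prepend_def)
  qed
qed


lemma cost_le_iff: "cost S \<rho> \<le> enat t \<longleftrightarrow> (\<exists>k\<le>t. \<rho> k \<in> S)"
proof
  assume "cost S \<rho> \<le> enat t"
  then show "\<exists>k\<le>t. \<rho> k \<in> S"
    unfolding cost_def by (auto split: if_splits intro: LeastI)
next
  assume "\<exists>k\<le>t. \<rho> k \<in> S"
  then obtain k where "k \<le> t" "\<rho> k \<in> S" by auto
  then show "cost S \<rho> \<le> enat t" unfolding cost_def
    by (auto intro: le_trans[OF Least_le])
qed

lemma cost_less_iff: "cost S \<rho> < enat t \<longleftrightarrow> (\<exists>k<t. \<rho> k \<in> S)"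
proof (cases t)
  case 0 then show ?thesis by (simp add: enat_0)
next
  case (Suc t')
  have "cost S \<rho> < enat t \<longleftrightarrow> cost S \<rho> \<le> enat t'"
    using Suc by (cases "cost S \<rho>") auto
  then show ?thesis using Suc cost_le_iff[of S \<rho> t'] by (auto simp: less_Suc_eq_le)
qed

lemma cost_eq_enat: "cost S \<rho> = enat t \<longleftrightarrow> \<rho> t \<in> S \<and> (\<forall>k<t. \<rho> k \<notin> S)"
proof
  assume a: "cost S \<rho> = enat t"
  then have ex: "\<exists>k. \<rho> k \<in> S" unfolding cost_def by (auto split: if_splits)
  then have "t = (LEAST k. \<rho> k \<in> S)" using a unfolding cost_def by auto
  then show "\<rho> t \<in> S \<and> (\<forall>k<t. \<rho> k \<notin> S)" using ex by (auto intro: LeastI dest: not_less_Least)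
next
  assume a: "\<rho> t \<in> S \<and> (\<forall>k<t. \<rho> k \<notin> S)"
  then have "(LEAST k. \<rho> k \<in> S) = t" by (intro Least_equality) (auto simp: not_less[symmetric])
  then show "cost S \<rho> = enat t" using a unfolding cost_def by auto
qed

lemma cost_0: "\<rho> 0 \<in> S \<Longrightarrow> cost S \<rho> = 0"
  using cost_eq_enat[of S \<rho> 0] by (simp add: zero_enat_def)

lemma cost_inf_iff: "cost S \<rho> = \<infinity> \<longleftrightarrow> (\<forall>k. \<rho> k \<notin> S)"
  unfolding cost_def by auto

lemma cost_shift:
  assumes "\<forall>k<a. \<rho> k \<notin> S"
  shows "cost S \<rho> = enat a + cost S (suffix_from a \<rho>)"
proof (cases "cost S (suffix_from a \<rho>)")
  case (enat t)
  then have "\<rho> (a + t) \<in> S \<and> (\<forall>k<t. \<rho> (a + k) \<notin> S)"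
    using cost_eq_enat[of S "suffix_from a \<rho>" t] by (simp add: suffix_from_def)
  then have "cost S \<rho> = enat (a + t)"
    using assms unfolding cost_eq_enat
    by (metis add_diff_inverse_nat less_diff_conv2 not_less_eq_eq add.commute le_add1 linorder_not_less)
  then show ?thesis using enat by simp
next
  case infinity
  then have "\<forall>k. \<rho> k \<notin> S" using assms unfolding cost_inf_iff suffix_from_def
    by (metis le_add_diff_inverse not_less)
  then have "cost S \<rho> = \<infinity>" by (simp add: cost_inf_iff)
  then show ?thesis using infinity by simp
qed

lemma cost_Suc: "\<rho> 0 \<notin> S \<Longrightarrow> cost S \<rho> = 1 + cost S (suffix_from 1 \<rho>)"
  using cost_shift[of 1 \<rho> S] by (simp add: one_enat_def)

lemma cost_agree:
  assumes "\<forall>k\<le>t. \<rho> k = \<rho>' k" "cost S \<rho> \<le> enat t"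
  shows "cost S \<rho>' = cost S \<rho>"
proof -
  obtain c where c: "cost S \<rho> = enat c" using assms(2) by (cases "cost S \<rho>") auto
  then have ct: "c \<le> t" using assms(2) by simp
  have "\<rho> c \<in> S \<and> (\<forall>k<c. \<rho> k \<notin> S)" using c cost_eq_enat by metis
  then have "\<rho>' c \<in> S \<and> (\<forall>k<c. \<rho>' k \<notin> S)" using ct assms(1) by auto
  then have "cost S \<rho>' = enat c" using cost_eq_enat by metis
  then show ?thesis using c by simp
qed

lemma suffix_suffix[simp]: "suffix_from a (suffix_from b \<rho>) = suffix_from (b + a) \<rho>"
  by (auto simp: suffix_from_def add.assoc)

lemma suffix_0[simp]: "suffix_from 0 \<rho> = \<rho>"
  by (auto simp: suffix_from_def)

lemma suffix_at[simp]: "suffix_from a \<rho> k = \<rho> (a + k)"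
  by (simp add: suffix_from_def)

definition pvalid :: "'a set \<Rightarrow> ('a \<times> 'a) set \<Rightarrow> ('a \<Rightarrow> 'p) \<Rightarrow> ('p \<Rightarrow> 'a list \<Rightarrow> 'a) \<Rightarrow> bool" where
  "pvalid Vg Eg ow \<sigma> \<longleftrightarrow> (\<forall>h. is_history Vg Eg h \<longrightarrow> (last h, \<sigma> (ow (last h)) h) \<in> Eg)"

locale xg =
  fixes Vg :: "'a set" and Eg :: "('a \<times> 'a) set" and ow :: "'a \<Rightarrow> 'p" and T :: "'p \<Rightarrow> 'a set"
  assumes finV: "finite Vg"
    and EsubV: "Eg \<subseteq> Vg \<times> Vg"
    and succ: "\<forall>u\<in>Vg. \<exists>w. (u, w) \<in> Eg"
    and upw: "\<And>u w i. (u, w) \<in> Eg \<Longrightarrow> u \<in> T i \<Longrightarrow> w \<in> T i"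
begin

abbreviation "valid \<equiv> is_history Vg Eg"

lemma valid_ne: "valid g \<Longrightarrow> g \<noteq> []"
  by (simp add: is_history_def)

lemma valid_last: "valid g \<Longrightarrow> last g \<in> Vg"
  unfolding is_history_def by (metis last_in_set subsetD)

lemma valid_single: "u \<in> Vg \<Longrightarrow> valid [u]"
  unfolding is_history_def by auto

lemma valid_snoc:
  assumes g: "valid g" and e: "(last g, w) \<in> Eg"
  shows "valid (g @ [w])"
proof -
  have ne: "g \<noteq> []" using g by (simp add: is_history_def)
  have w: "w \<in> Vg" using e EsubV by auto
  have "(\<forall>k. Suc k < length (g @ [w]) \<longrightarrow> ((g @ [w]) ! k, (g @ [w]) ! Suc k) \<in> Eg)"
  proof (intro allI impI)
    fix k assume k: "Suc k < length (g @ [w])"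
    show "((g @ [w]) ! k, (g @ [w]) ! Suc k) \<in> Eg"
    proof (cases "Suc k < length g")
      case True
      then show ?thesis using g by (simp add: nth_append is_history_def)
    next
      case False
      then have "Suc k = length g" using k by simp
      then have kk: "k = length g - 1" by simp
      then have "(g @ [w]) ! k = last g" "(g @ [w]) ! Suc k = w"
        using ne kk by (auto simp: nth_append last_conv_nth)
      then show ?thesis using e by simp
    qed
  qed
  then show ?thesis using g w unfolding is_history_def by simp
qed

lemma valid_butlast_edge:
  assumes v: "valid (g @ [w])" and ne: "g \<noteq> []"
  shows "valid g \<and> (last g, w) \<in> Eg"
proof -
  have "valid g" unfolding is_history_def
  proof (intro conjI allI impI)
    show "g \<noteq> []" by fact
    show "set g \<subseteq> Vg" using v unfolding is_history_def by auto
    fix k assume k: "Suc k < length g"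
    then have "((g @ [w]) ! k, (g @ [w]) ! Suc k) \<in> Eg" using v unfolding is_history_def by auto
    then show "(g ! k, g ! Suc k) \<in> Eg" using k by (simp add: nth_append)
  qed
  moreover have "((g @ [w]) ! (length g - 1), (g @ [w]) ! Suc (length g - 1)) \<in> Eg"
  proof -
    have "Suc (length g - 1) < length (g @ [w])" using ne by simp
    then show ?thesis using v unfolding is_history_def by blast
  qed
  then have "(last g, w) \<in> Eg" using ne by (simp add: nth_append last_conv_nth)
  ultimately show ?thesis by simp
qed

lemma valid_nth: "valid g \<Longrightarrow> k < length g \<Longrightarrow> g ! k \<in> Vg"
  unfolding is_history_def by auto

lemma valid_edge: "valid g \<Longrightarrow> Suc k < length g \<Longrightarrow> (g ! k, g ! Suc k) \<in> Eg"
  unfolding is_history_def by auto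

lemma pvalid_upd: "pvalid Vg Eg ow \<sigma> \<Longrightarrow> is_strategy Vg ow Eg i \<tau> \<Longrightarrow> pvalid Vg Eg ow (\<sigma>(i := \<tau>))"
  unfolding pvalid_def is_strategy_def by auto

lemma pvalid_uniform: "(\<And>h. valid h \<Longrightarrow> (last h, s h) \<in> Eg) \<Longrightarrow> pvalid Vg Eg ow (\<lambda>i. s)"
  unfolding pvalid_def by auto

lemma uniform_strategy: "(\<And>h. valid h \<Longrightarrow> (last h, s h) \<in> Eg) \<Longrightarrow> is_strategy Vg ow Eg i s"
  unfolding is_strategy_def by auto

lemma ext_valid: "pvalid Vg Eg ow \<sigma> \<Longrightarrow> valid g \<Longrightarrow> valid (extH ow \<sigma> g n)"
  by (induction n) (auto simp: pvalid_def intro!: valid_snoc)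

lemma cont_play:
  assumes "pvalid Vg Eg ow \<sigma>" "valid g"
  shows "is_play Vg Eg (cont ow \<sigma> g)"
  unfolding is_play_def
proof
  fix k
  have ne: "g \<noteq> []" using assms valid_ne by auto
  have v: "valid (extH ow \<sigma> g (Suc (Suc k)))" using ext_valid assms by blast
  have "cont ow \<sigma> g k = extH ow \<sigma> g (Suc (Suc k)) ! k"
       "cont ow \<sigma> g (Suc k) = extH ow \<sigma> g (Suc (Suc k)) ! Suc k"
    using cont_ext_nth'[OF ne, of k "Suc (Suc k)" ow \<sigma>] cont_ext_nth'[OF ne, of "Suc k" "Suc (Suc k)" ow \<sigma>]
    by (simp_all del: extH.simps)
  then show "cont ow \<sigma> g k \<in> Vg \<and> (cont ow \<sigma> g k, cont ow \<sigma> g (Suc k)) \<in> Eg"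
    using valid_nth[OF v] valid_edge[OF v] by simp
qed

lemma play_upw: "is_play Vg Eg \<rho> \<Longrightarrow> a \<le> b \<Longrightarrow> \<rho> a \<in> T i \<Longrightarrow> \<rho> b \<in> T i"
proof (induction b)
  case 0 then show ?case by simp
next
  case (Suc b)
  show ?case
  proof (cases "a = Suc b")
    case True then show ?thesis using Suc by simp
  next
    case False
    then have "\<rho> b \<in> T i" using Suc by simp
    then show ?thesis using Suc(2) upw unfolding is_play_def by blast
  qed
qed

lemma cont_ext_last: "g \<noteq> [] \<Longrightarrow> cont ow \<sigma> g (length g - 1) = last g"
  by (simp add: cont_init last_conv_nth)

lemma ext_agree:
  assumes "pvalid Vg Eg ow \<sigma>1" "valid g"
    and "\<And>h. valid h \<Longrightarrow> length h < M \<Longrightarrow> \<sigma>1 (ow (last h)) h = \<sigma>2 (ow (last h)) h"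
  shows "length g + n \<le> M \<Longrightarrow> extH ow \<sigma>1 g n = extH ow \<sigma>2 g n"
proof (induction n)
  case 0 then show ?case by simp
next
  case (Suc n)
  then have eq: "extH ow \<sigma>1 g n = extH ow \<sigma>2 g n" by simp
  have "valid (extH ow \<sigma>1 g n)" using ext_valid assms by blast
  then show ?case using Suc eq assms(3)[of "extH ow \<sigma>1 g n"] by simp
qed

lemma cont_agree:
  assumes "pvalid Vg Eg ow \<sigma>1" "valid g"
    and "\<And>h. valid h \<Longrightarrow> length h < M \<Longrightarrow> \<sigma>1 (ow (last h)) h = \<sigma>2 (ow (last h)) h"
    and "k < M"
  shows "cont ow \<sigma>1 g k = cont ow \<sigma>2 g k"
proof (cases "k < length g")
  case True then show ?thesis by (simp add: cont_init)
next
  case False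
  have ne: "g \<noteq> []" using assms valid_ne by auto
  have "extH ow \<sigma>1 g (Suc k - length g) = extH ow \<sigma>2 g (Suc k - length g)"
    using ext_agree[of \<sigma>1 g M \<sigma>2 "Suc k - length g"] assms False by simp
  moreover have "cont ow \<sigma>1 g k = extH ow \<sigma>1 g (Suc k - length g) ! k"
     "cont ow \<sigma>2 g k = extH ow \<sigma>2 g (Suc k - length g) ! k"
    using ne False by (auto intro!: cont_ext_nth')
  ultimately show ?thesis by simp
qed

end


definition tcost :: "nat \<Rightarrow> 'a set \<Rightarrow> (nat \<Rightarrow> 'a) \<Rightarrow> enat" where
  "tcost L S \<rho> = (if cost S \<rho> < enat L then cost S \<rho> else \<infinity>)"

lemma tcost_agree:
  assumes "\<forall>k<L. \<rho> k = \<rho>' k"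
  shows "tcost L S \<rho> = tcost L S \<rho>'"
proof (cases "cost S \<rho> < enat L")
  case True
  then obtain k where k: "k < L" "\<rho> k \<in> S" unfolding cost_less_iff by blast
  then have L: "cost S \<rho> \<le> enat (L - 1)" unfolding cost_le_iff by (intro exI[of _ k]) simp
  have ag: "\<forall>j\<le>L - 1. \<rho> j = \<rho>' j"
  proof (intro allI impI)
    fix j assume "j \<le> L - 1"
    then have "j < L" using k(1) by linarith
    then show "\<rho> j = \<rho>' j" using assms by blast
  qed
  have "cost S \<rho>' = cost S \<rho>" by (rule cost_agree[OF ag L])
  then show ?thesis using True unfolding tcost_def by simp
next
  case False
  have "\<not> cost S \<rho>' < enat L"
  proof
    assume "cost S \<rho>' < enat L"
    then obtain k where "k < L" "\<rho>' k \<in> S" unfolding cost_less_iff by blast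
    then have "cost S \<rho> < enat L" unfolding cost_less_iff using assms by auto
    then show False using False by simp
  qed
  then show ?thesis using False unfolding tcost_def by simp
qed

context xg
begin

definition chooseS :: "'a list \<Rightarrow> ('a \<Rightarrow> enat) \<Rightarrow> 'a" where
  "chooseS g c = (SOME w. (last g, w) \<in> Eg \<and> (\<forall>w'. (last g, w') \<in> Eg \<longrightarrow> c w \<le> c w'))"

lemma choose_prop:
  assumes "last g \<in> Vg"
  shows "(last g, chooseS g c) \<in> Eg \<and> (\<forall>w'. (last g, w') \<in> Eg \<longrightarrow> c (chooseS g c) \<le> c w')"
proof -
  let ?S = "{w. (last g, w) \<in> Eg}"
  have fin: "finite ?S" using finV EsubV by (auto intro: finite_subset)
  have ne: "?S \<noteq> {}" using succ assms by auto
  have "Min (c ` ?S) \<in> c ` ?S" using fin ne by (intro Min_in) auto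
  then obtain w where w: "w \<in> ?S" "c w = Min (c ` ?S)" by auto
  then have "(last g, w) \<in> Eg \<and> (\<forall>w'. (last g, w') \<in> Eg \<longrightarrow> c w \<le> c w')"
    using fin by auto
  then show ?thesis unfolding chooseS_def by (rule someI)
qed

primrec compr :: "nat \<Rightarrow> nat \<Rightarrow> 'a list \<Rightarrow> 'a list" where
  "compr L 0 g = g"
| "compr L (Suc r) g = compr L r (g @ [chooseS g (\<lambda>w'. tcost L (T (ow (last g))) ((!) (compr L r (g @ [w']))))])"

definition sD :: "nat \<Rightarrow> 'a list \<Rightarrow> 'a" where
  "sD L g = (if length g < L then chooseS g (\<lambda>w'. tcost L (T (ow (last g))) ((!) (compr L (L - Suc (length g)) (g @ [w']))))
             else (SOME w. (last g, w) \<in> Eg))"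

lemma sD_valid: "last g \<in> Vg \<Longrightarrow> (last g, sD L g) \<in> Eg"
  unfolding sD_def using choose_prop succ by (auto intro: someI_ex)

lemma sD_pvalid: "pvalid Vg Eg ow (\<lambda>i. sD L)"
  by (rule pvalid_uniform) (simp add: sD_valid valid_last)

lemma compr_length[simp]: "length (compr L r g) = length g + r"
  by (induction r arbitrary: g) auto

lemma BI1:
  "valid g \<Longrightarrow> length g + r = L \<Longrightarrow> k < L \<Longrightarrow> cont ow (\<lambda>i. sD L) g k = compr L r g ! k"
proof (induction r arbitrary: g)
  case 0 then show ?case by (simp add: cont_init)
next
  case (Suc r)
  define w where "w = sD L g"
  have w2: "w = chooseS g (\<lambda>w'. tcost L (T (ow (last g))) ((!) (compr L r (g @ [w']))))"
    using Suc.prems unfolding w_def sD_def by auto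
  have e: "(last g, w) \<in> Eg" unfolding w_def by (rule sD_valid[OF valid_last[OF Suc.prems(1)]])
  have "cont ow (\<lambda>i. sD L) g = cont ow (\<lambda>i. sD L) (g @ [w])"
    unfolding w_def using cont_snoc[of g ow "\<lambda>i. sD L"] valid_ne[OF Suc.prems(1)] by simp
  moreover have "cont ow (\<lambda>i. sD L) (g @ [w]) k = compr L r (g @ [w]) ! k"
    using Suc.IH[of "g @ [w]"] Suc.prems valid_snoc[OF Suc.prems(1) e] by simp
  ultimately show ?case using w2 by simp
qed

lemma BI2:
  "valid g \<Longrightarrow> length g + r = L \<Longrightarrow> is_strategy Vg ow Eg i \<tau> \<Longrightarrow> s' = (\<lambda>i. sD L)(i := \<tau>) \<Longrightarrow>
   tcost L (T i) (cont ow (\<lambda>i. sD L) g) \<le> tcost L (T i) (cont ow s' g)"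
proof (induction r arbitrary: g)
  case 0
  have "\<forall>k<L. cont ow (\<lambda>i. sD L) g k = cont ow s' g k"
    using 0 by (simp add: cont_init)
  then have "tcost L (T i) (cont ow (\<lambda>i. sD L) g) = tcost L (T i) (cont ow s' g)"
    by (rule tcost_agree)
  then show ?case by (rule eq_refl)
next
  case (Suc r)
  let ?s = "\<lambda>i. sD L"
  have s'a: "s' j h = (if j = i then \<tau> h else sD L h)" for j h using Suc.prems(4) by simp
  have ne: "g \<noteq> []" using Suc.prems valid_ne by auto
  have lg: "last g \<in> Vg" using valid_last Suc.prems by auto
  define c where "c = (\<lambda>w'. tcost L (T (ow (last g))) ((!) (compr L r (g @ [w']))))"
  define w where "w = sD L g"
  have w2: "w = chooseS g c"
    using Suc.prems unfolding w_def sD_def c_def by auto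
  have e: "(last g, w) \<in> Eg" unfolding w_def by (rule sD_valid[OF lg])
  have cs: "cont ow ?s g = cont ow ?s (g @ [w])"
    unfolding w_def using cont_snoc[of g ow ?s] ne by simp
  have cs': "cont ow s' g = cont ow s' (g @ [s' (ow (last g)) g])"
    using cont_snoc[of g ow s'] ne by simp
  show ?case
  proof (cases "ow (last g) = i")
    case False
    then have "s' (ow (last g)) g = w" unfolding w_def s'a by simp
    then have cs'': "cont ow s' g = cont ow s' (g @ [w])" using cs' by simp
    show ?thesis using Suc.IH[of "g @ [w]"] Suc.prems valid_snoc[OF Suc.prems(1) e] cs cs'' by simp
  next
    case True
    define w' where "w' = \<tau> g"
    have e': "(last g, w') \<in> Eg" using Suc.prems(3) Suc.prems(1) True unfolding is_strategy_def w'_def by blast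
    have v': "valid (g @ [w'])" using valid_snoc[OF Suc.prems(1) e'] .
    have "s' (ow (last g)) g = w'" unfolding w'_def s'a using True by simp
    then have cs'': "cont ow s' g = cont ow s' (g @ [w'])" using cs' by simp
    have ih: "tcost L (T i) (cont ow ?s (g @ [w'])) \<le> tcost L (T i) (cont ow s' (g @ [w']))"
      using Suc.IH[OF v'] Suc.prems by simp
    have a1: "tcost L (T i) (cont ow ?s (g @ [w])) = c w"
      unfolding c_def True
      using BI1[of "g @ [w]" r L] Suc.prems valid_snoc[OF Suc.prems(1) e]
      by (intro tcost_agree) simp
    have a2: "tcost L (T i) (cont ow ?s (g @ [w'])) = c w'"
      unfolding c_def True
      using BI1[of "g @ [w']" r L] Suc.prems v'
      by (intro tcost_agree) simp
    have "c w \<le> c w'" using choose_prop[OF lg, of c] e' w2 by simp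
    then show ?thesis using ih a1 a2 cs cs'' by simp
  qed
qed

lemma BI3:
  assumes "valid g" "is_strategy Vg ow Eg i \<tau>"
  shows "tcost L (T i) (cont ow (\<lambda>i. sD L) g) \<le> tcost L (T i) (cont ow ((\<lambda>i. sD L)(i := \<tau>)) g)"
proof (cases "length g \<le> L")
  case True
  then show ?thesis using BI2[of g "L - length g" L i \<tau> "(\<lambda>i. sD L)(i := \<tau>)"] assms by simp
next
  case False
  have "\<forall>k<L. cont ow (\<lambda>i. sD L) g k = cont ow ((\<lambda>i. sD L)(i := \<tau>)) g k"
    using False by (simp add: cont_init)
  then have "tcost L (T i) (cont ow (\<lambda>i. sD L) g) = tcost L (T i) (cont ow ((\<lambda>i. sD L)(i := \<tau>)) g)"
    by (rule tcost_agree)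
  then show ?thesis by (rule eq_refl)
qed

definition HL :: "nat \<Rightarrow> 'a list set" where
  "HL M = {g. g \<noteq> [] \<and> set g \<subseteq> Vg \<and> length g \<le> M}"

lemma HL_finite: "finite (HL M)"
  unfolding HL_def
  by (rule finite_subset[OF _ finite_lists_length_le[OF finV, of M]]) auto

lemma sD_in_HL: "g \<in> HL M \<Longrightarrow> sD L g \<in> Vg"
proof -
  assume "g \<in> HL M"
  then have "last g \<in> Vg" unfolding HL_def by auto
  then show ?thesis using sD_valid EsubV by blast
qed

definition nxt :: "nat set \<Rightarrow> nat \<Rightarrow> nat set" where
  "nxt S M = (let a = SOME a. a \<in> S \<and> infinite {D\<in>S. \<forall>g\<in>HL M. sD D g = sD a g}
              in {D\<in>S. \<forall>g\<in>HL M. sD D g = sD a g})"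

lemma nxt_prop:
  assumes "infinite S"
  shows "infinite (nxt S M) \<and> nxt S M \<subseteq> S \<and> (\<forall>D\<in>nxt S M. \<forall>D'\<in>nxt S M. \<forall>g\<in>HL M. sD D g = sD D' g)"
proof -
  define f where "f D = restrict (sD D) (HL M)" for D
  have "f ` S \<subseteq> PiE (HL M) (\<lambda>_. Vg)" unfolding f_def using sD_in_HL by auto
  moreover have "finite (PiE (HL M) (\<lambda>_. Vg))" using finite_PiE[of "HL M" "\<lambda>_. Vg"] finV HL_finite by blast
  ultimately have "finite (f ` S)" using finite_subset by blast
  then obtain a0 where a0: "a0 \<in> S" "infinite {a\<in>S. f a = f a0}"
    using pigeonhole_infinite[OF assms \<open>finite (f ` S)\<close>] by blast
  have eq: "{a\<in>S. f a = f b} = {D\<in>S. \<forall>g\<in>HL M. sD D g = sD b g}" for b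
    unfolding f_def by (auto simp: restrict_def fun_eq_iff)
  have "\<exists>a. a \<in> S \<and> infinite {D\<in>S. \<forall>g\<in>HL M. sD D g = sD a g}"
    using a0 eq by auto
  then have "(SOME a. a \<in> S \<and> infinite {D\<in>S. \<forall>g\<in>HL M. sD D g = sD a g}) \<in> S \<and>
      infinite {D\<in>S. \<forall>g\<in>HL M. sD D g = sD (SOME a. a \<in> S \<and> infinite {D\<in>S. \<forall>g\<in>HL M. sD D g = sD a g}) g}"
    by (rule someI_ex)
  then show ?thesis unfolding nxt_def Let_def by auto
qed

primrec Sq :: "nat \<Rightarrow> nat set" where
  "Sq 0 = UNIV"
| "Sq (Suc M) = nxt (Sq M) M"

lemma Sq_inf: "infinite (Sq M)"
proof (induction M)
  case 0 then show ?case by simp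
next
  case (Suc M)
  then show ?case using nxt_prop[OF Suc, of M] by simp
qed

lemma Sq_mono: "m \<le> n \<Longrightarrow> Sq n \<subseteq> Sq m"
proof (induction n)
  case 0 then show ?case by simp
next
  case (Suc n)
  have "Sq (Suc n) \<subseteq> Sq n" using nxt_prop[OF Sq_inf[of n], of n] by simp
  show ?case
  proof (cases "m = Suc n")
    case True then show ?thesis by simp
  next
    case False
    then have "m \<le> n" using Suc.prems by simp
    then show ?thesis using Suc.IH \<open>Sq (Suc n) \<subseteq> Sq n\<close> by blast
  qed
qed

definition sL :: "'a list \<Rightarrow> 'a" where
  "sL g = sD (SOME D. D \<in> Sq (Suc (length g))) g"

lemma Sq_some: "(SOME D. D \<in> Sq M) \<in> Sq M"
proof -
  have "Sq M \<noteq> {}" using Sq_inf[of M] by auto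
  then show ?thesis by (simp add: some_in_eq)
qed

lemma sL_eq:
  assumes g0: "g \<in> HL M" and D0: "D \<in> Sq (Suc M)"
  shows "sD D g = sL g"
proof -
  define M0 where "M0 = length g"
  have le: "M0 \<le> M" using g0 unfolding HL_def M0_def by simp
  have "Sq (Suc M) \<subseteq> Sq (Suc M0)" using Sq_mono[of "Suc M0" "Suc M"] le by simp
  then have D: "D \<in> Sq (Suc M0)" using D0 by blast
  have D': "(SOME D. D \<in> Sq (Suc M0)) \<in> Sq (Suc M0)" by (rule Sq_some)
  have g: "g \<in> HL M0" using g0 unfolding HL_def M0_def by simp
  have "\<forall>D\<in>nxt (Sq M0) M0. \<forall>D'\<in>nxt (Sq M0) M0. \<forall>g\<in>HL M0. sD D g = sD D' g"
    using nxt_prop[OF Sq_inf[of M0], of M0] by blast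
  then have "\<forall>D\<in>Sq (Suc M0). \<forall>D'\<in>Sq (Suc M0). \<forall>g\<in>HL M0. sD D g = sD D' g"
    by (simp only: Sq.simps)
  then have "sD D g = sD (SOME D. D \<in> Sq (Suc M0)) g" using D D' g by blast
  then show ?thesis unfolding sL_def M0_def by simp
qed

lemma exists_D: "\<exists>D\<ge>D0. D \<in> Sq (Suc M)"
  using Sq_inf[of "Suc M"] unfolding infinite_nat_iff_unbounded_le by blast

lemma sL_valid: "valid g \<Longrightarrow> (last g, sL g) \<in> Eg"
  unfolding sL_def using sD_valid valid_last by blast

lemma sL_pvalid: "pvalid Vg Eg ow (\<lambda>i. sL)"
  by (rule pvalid_uniform) (simp add: sL_valid)

theorem sL_SPE:
  assumes g: "valid g" and tau: "is_strategy Vg ow Eg i \<tau>"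
  shows "cost (T i) (cont ow (\<lambda>i. sL) g) \<le> cost (T i) (cont ow ((\<lambda>i. sL)(i := \<tau>)) g)"
proof (rule ccontr)
  let ?s = "\<lambda>i. sL" and ?s' = "(\<lambda>i. sL)(i := \<tau>)"
  assume "\<not> ?thesis"
  then have lt: "cost (T i) (cont ow ?s' g) < cost (T i) (cont ow ?s g)" by simp
  then obtain t where t: "cost (T i) (cont ow ?s' g) = enat t"
    by (cases "cost (T i) (cont ow ?s' g)") auto
  define M where "M = max (Suc t) (length g)"
  obtain D where D: "D \<ge> M" "D \<in> Sq (Suc M)" using exists_D by blast
  let ?d = "\<lambda>i. sD D" and ?d' = "(\<lambda>i. sD D)(i := \<tau>)"
  have agr: "sL h = sD D h" if "valid h" "length h < M" for h
    using sL_eq[OF _ D(2), of h] that unfolding HL_def is_history_def by auto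
  have pv: "pvalid Vg Eg ow ?s" by (rule sL_pvalid)
  have pv': "pvalid Vg Eg ow ?s'" by (rule pvalid_upd[OF pv tau])
  have c1: "cont ow ?s g k = cont ow ?d g k" if "k \<le> t" for k
    using cont_agree[OF pv g, of M ?d k] agr that unfolding M_def by auto
  have c2: "cont ow ?s' g k = cont ow ?d' g k" if "k \<le> t" for k
    using cont_agree[OF pv' g, of M ?d' k] agr that unfolding M_def by auto
  have "cost (T i) (cont ow ?d' g) = enat t"
    using cost_agree[of t "cont ow ?s' g" "cont ow ?d' g"] c2 t by auto
  moreover have "t < D" using D unfolding M_def by auto
  ultimately have "tcost D (T i) (cont ow ?d' g) = enat t" unfolding tcost_def by auto
  then have "tcost D (T i) (cont ow ?d g) \<le> enat t" using BI3[OF g tau, of D] by simp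
  then have "cost (T i) (cont ow ?d g) \<le> enat t" unfolding tcost_def by (auto split: if_splits)
  then obtain k where "k \<le> t" "cont ow ?d g k \<in> T i" using cost_le_iff by metis
  then have "cost (T i) (cont ow ?s g) \<le> enat t" using c1 cost_le_iff by metis
  then show False using lt t by simp
qed

end


definition LamG :: "'a set \<Rightarrow> ('a \<times> 'a) set \<Rightarrow> ('a \<Rightarrow> 'p) \<Rightarrow> ('p \<Rightarrow> 'a set) \<Rightarrow> ('a \<Rightarrow> enat) \<Rightarrow> 'a \<Rightarrow> (nat \<Rightarrow> 'a) set" where
  "LamG Vg Eg ow T lam u = {\<rho>. is_play Vg Eg \<rho> \<and> \<rho> 0 = u \<and>
     (\<forall>n. cost (T (ow (\<rho> n))) (suffix_from n \<rho>) \<le> lam (\<rho> n))}"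

lemma LamG_suffix:
  assumes "\<rho> \<in> LamG Vg Eg ow T lam u"
  shows "suffix_from m \<rho> \<in> LamG Vg Eg ow T lam (\<rho> m)"
proof -
  have "is_play Vg Eg (suffix_from m \<rho>)" using assms unfolding LamG_def is_play_def by simp
  moreover have "\<forall>n. cost (T (ow (suffix_from m \<rho> n))) (suffix_from n (suffix_from m \<rho>)) \<le> lam (suffix_from m \<rho> n)"
  proof
    fix n
    have "cost (T (ow (\<rho> (m + n)))) (suffix_from (m + n) \<rho>) \<le> lam (\<rho> (m + n))"
      using assms unfolding LamG_def by blast
    then show "cost (T (ow (suffix_from m \<rho> n))) (suffix_from n (suffix_from m \<rho>)) \<le> lam (suffix_from m \<rho> n)"
      by simp
  qed
  ultimately show ?thesis unfolding LamG_def by simp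
qed

lemma LamG_start: "\<rho> \<in> LamG Vg Eg ow T lam u \<Longrightarrow> \<rho> 0 = u"
  unfolding LamG_def by simp

lemma LamG_play: "\<rho> \<in> LamG Vg Eg ow T lam u \<Longrightarrow> is_play Vg Eg \<rho>"
  unfolding LamG_def by simp

lemma LamG_0: "\<rho> \<in> LamG Vg Eg ow T lam u \<Longrightarrow> cost (T (ow u)) \<rho> \<le> lam u"
proof -
  assume a: "\<rho> \<in> LamG Vg Eg ow T lam u"
  then have "cost (T (ow (\<rho> 0))) (suffix_from 0 \<rho>) \<le> lam (\<rho> 0)" "\<rho> 0 = u" unfolding LamG_def by blast+
  then show ?thesis by simp
qed

context xg
begin

abbreviation "LL lam \<equiv> LamG Vg Eg ow T lam"

definition goodp :: "(nat \<Rightarrow> (nat \<Rightarrow> 'a) set) \<Rightarrow> 'a list \<Rightarrow> bool" where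
  "goodp A l \<longleftrightarrow> (\<forall>n. \<exists>\<rho>\<in>A n. \<forall>k<length l. \<rho> k = l ! k)"

lemma goodp_ext:
  assumes g: "goodp A l" and mono: "\<And>m n. m \<le> n \<Longrightarrow> A n \<subseteq> A m"
    and inV: "\<And>n \<rho> k. \<rho> \<in> A n \<Longrightarrow> \<rho> k \<in> Vg"
  shows "\<exists>x. goodp A (l @ [x])"
proof (rule ccontr)
  assume "\<not> ?thesis"
  then have "\<forall>x\<in>Vg. \<exists>n. \<not> (\<exists>\<rho>\<in>A n. \<forall>k<length (l @ [x]). \<rho> k = (l @ [x]) ! k)"
    unfolding goodp_def by blast
  then obtain f where f: "\<forall>x\<in>Vg. \<not> (\<exists>\<rho>\<in>A (f x). \<forall>k<length (l @ [x]). \<rho> k = (l @ [x]) ! k)"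
    by (rule bchoice[elim_format]) blast
  define N where "N = (\<Sum>x\<in>Vg. f x)"
  obtain \<rho> where \<rho>: "\<rho> \<in> A N" "\<forall>k<length l. \<rho> k = l ! k" using g unfolding goodp_def by blast
  define x where "x = \<rho> (length l)"
  have x: "x \<in> Vg" unfolding x_def using inV \<rho>(1) by blast
  have "f x \<le> N" unfolding N_def using x finV by (intro member_le_sum) auto
  then have "\<rho> \<in> A (f x)" using mono \<rho>(1) by blast
  moreover have "\<forall>k<length (l @ [x]). \<rho> k = (l @ [x]) ! k"
  proof (intro allI impI)
    fix k assume "k < length (l @ [x])"
    then have "k < length l \<or> k = length l" by auto
    then show "\<rho> k = (l @ [x]) ! k" using \<rho>(2) x_def by (auto simp: nth_append)
  qed
  ultimately show False using f x by blast
qed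

primrec kseq :: "(nat \<Rightarrow> (nat \<Rightarrow> 'a) set) \<Rightarrow> 'a \<Rightarrow> nat \<Rightarrow> 'a list" where
  "kseq A u 0 = [u]"
| "kseq A u (Suc m) = kseq A u m @ [SOME x. goodp A (kseq A u m @ [x])]"

lemma kseq_length[simp]: "length (kseq A u m) = Suc m"
  by (induction m) auto

lemma kseq_prefix: "m \<le> n \<Longrightarrow> k \<le> m \<Longrightarrow> kseq A u n ! k = kseq A u m ! k"
proof (induction n)
  case 0 then show ?case by simp
next
  case (Suc n)
  show ?case
  proof (cases "m = Suc n")
    case True then show ?thesis by simp
  next
    case False
    then have "m \<le> n" using Suc by simp
    then have "k < length (kseq A u n)" using Suc by simp
    then show ?thesis using Suc \<open>m \<le> n\<close> by (simp add: nth_append)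
  qed
qed

lemma kseq_good:
  assumes "goodp A [u]" and mono: "\<And>m n. m \<le> n \<Longrightarrow> A n \<subseteq> A m"
    and inV: "\<And>n \<rho> k. \<rho> \<in> A n \<Longrightarrow> \<rho> k \<in> Vg"
  shows "goodp A (kseq A u m)"
proof (induction m)
  case 0 then show ?case using assms by simp
next
  case (Suc m)
  have "\<exists>x. goodp A (kseq A u m @ [x])"
    by (rule goodp_ext[where A=A]) (use Suc mono inV in blast)+
  then have "goodp A (kseq A u m @ [SOME x. goodp A (kseq A u m @ [x])])" by (rule someI_ex)
  then show ?case by simp
qed

lemma koenig:
  fixes A :: "nat \<Rightarrow> (nat \<Rightarrow> 'a) set"
  assumes ex: "\<And>n. A n \<noteq> {}" and mono: "\<And>m n. m \<le> n \<Longrightarrow> A n \<subseteq> A m"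
    and inV: "\<And>n \<rho> k. \<rho> \<in> A n \<Longrightarrow> \<rho> k \<in> Vg"
    and st: "\<And>n \<rho>. \<rho> \<in> A n \<Longrightarrow> \<rho> 0 = u"
  shows "\<exists>\<rho>. \<forall>n. \<exists>\<rho>'\<in>A n. \<forall>k\<le>n. \<rho>' k = \<rho> k"
proof -
  have g0: "goodp A [u]" unfolding goodp_def
  proof
    fix n
    obtain \<rho> where "\<rho> \<in> A n" using ex by blast
    then show "\<exists>\<rho>\<in>A n. \<forall>k<length [u]. \<rho> k = [u] ! k" using st by auto
  qed
  define \<rho> where "\<rho> k = kseq A u k ! k" for k
  have "\<exists>\<rho>'\<in>A n. \<forall>k\<le>n. \<rho>' k = \<rho> k" for n
  proof -
    obtain \<rho>' where r: "\<rho>' \<in> A n" "\<forall>k<length (kseq A u n). \<rho>' k = kseq A u n ! k"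
    proof -
      have "goodp A (kseq A u n)" by (rule kseq_good[where A=A]) (use g0 mono inV in blast)+
      then show ?thesis using that unfolding goodp_def by blast
    qed
    have "\<forall>k\<le>n. \<rho>' k = \<rho> k"
    proof (intro allI impI)
      fix k assume "k \<le> n"
      then show "\<rho>' k = \<rho> k" using r(2) kseq_prefix[of k n k A u] unfolding \<rho>_def by simp
    qed
    then show ?thesis using r(1) by blast
  qed
  then show ?thesis by blast
qed

lemma koenig_Lam:
  assumes ub: "\<And>n. \<exists>\<rho>\<in>LL lam u. enat n \<le> cost (T i) \<rho>"
  shows "\<exists>\<rho>\<in>LL lam u. cost (T i) \<rho> = \<infinity>"
proof -
  define A where "A n = {\<rho>\<in>LL lam u. enat n \<le> cost (T i) \<rho>}" for n
  have ex: "A n \<noteq> {}" for n using ub unfolding A_def by blast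
  have mono: "A n \<subseteq> A m" if "m \<le> n" for m n
  proof
    fix \<rho> assume "\<rho> \<in> A n"
    then have "\<rho> \<in> LL lam u" "enat n \<le> cost (T i) \<rho>" unfolding A_def by auto
    moreover have "enat m \<le> enat n" using that by simp
    ultimately show "\<rho> \<in> A m" unfolding A_def using order_trans by blast
  qed
  have inV: "\<rho> k \<in> Vg" if "\<rho> \<in> A n" for n \<rho> k
    using that unfolding A_def LamG_def is_play_def by blast
  have st: "\<rho> 0 = u" if "\<rho> \<in> A n" for n \<rho> using that unfolding A_def LamG_def by blast
  have "\<exists>\<rho>. \<forall>n. \<exists>\<rho>'\<in>A n. \<forall>k\<le>n. \<rho>' k = \<rho> k"
    by (rule koenig[where A=A and u=u]) (use ex mono inV st in blast)+
  then obtain \<rho> where r: "\<forall>n. \<exists>\<rho>'\<in>A n. \<forall>k\<le>n. \<rho>' k = \<rho> k" by blast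
  have play: "is_play Vg Eg \<rho>" unfolding is_play_def
  proof
    fix k
    obtain \<rho>' where "\<rho>' \<in> A (Suc k)" "\<forall>j\<le>Suc k. \<rho>' j = \<rho> j" using r by blast
    moreover then have "is_play Vg Eg \<rho>'" unfolding A_def LamG_def by blast
    ultimately have "\<rho>' k \<in> Vg \<and> (\<rho>' k, \<rho>' (Suc k)) \<in> Eg" "\<rho>' k = \<rho> k" "\<rho>' (Suc k) = \<rho> (Suc k)"
      unfolding is_play_def by (blast, simp_all)
    then show "\<rho> k \<in> Vg \<and> (\<rho> k, \<rho> (Suc k)) \<in> Eg" by simp
  qed
  have start: "\<rho> 0 = u"
  proof -
    obtain \<rho>' where "\<rho>' \<in> A 0" "\<forall>j\<le>0. \<rho>' j = \<rho> j" using r by blast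
    then show ?thesis using st by force
  qed
  have cons: "cost (T (ow (\<rho> m))) (suffix_from m \<rho>) \<le> lam (\<rho> m)" for m
  proof (cases "lam (\<rho> m)")
    case (enat c)
    obtain \<rho>' where r': "\<rho>' \<in> A (m + c)" "\<forall>j\<le>m + c. \<rho>' j = \<rho> j" using r by blast
    then have "cost (T (ow (\<rho>' m))) (suffix_from m \<rho>') \<le> lam (\<rho>' m)" unfolding A_def LamG_def by blast
    moreover have "\<rho>' m = \<rho> m" using r' by simp
    ultimately have "cost (T (ow (\<rho> m))) (suffix_from m \<rho>') \<le> enat c" using enat by simp
    then obtain k where k: "k \<le> c" "\<rho>' (m + k) \<in> T (ow (\<rho> m))" unfolding cost_le_iff by auto
    then have "\<rho> (m + k) \<in> T (ow (\<rho> m))" using r' by simp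
    then have "cost (T (ow (\<rho> m))) (suffix_from m \<rho>) \<le> enat c" unfolding cost_le_iff using k(1) by auto
    then show ?thesis using enat by simp
  qed simp
  have "\<rho> \<in> LL lam u" unfolding LamG_def using play start cons by blast
  moreover have "cost (T i) \<rho> = \<infinity>"
  proof (rule ccontr)
    assume "cost (T i) \<rho> \<noteq> \<infinity>"
    then obtain t where "\<rho> t \<in> T i" unfolding cost_inf_iff by blast
    obtain \<rho>' where r': "\<rho>' \<in> A (Suc t)" "\<forall>j\<le>Suc t. \<rho>' j = \<rho> j" using r by blast
    then have "\<rho>' t \<in> T i" using \<open>\<rho> t \<in> T i\<close> by simp
    then have "cost (T i) \<rho>' \<le> enat t" unfolding cost_le_iff by auto
    moreover have "enat (Suc t) \<le> cost (T i) \<rho>'" using r'(1) unfolding A_def by blast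
    ultimately have "enat (Suc t) \<le> enat t" by (rule order_trans[rotated])
    then show False by simp
  qed
  ultimately show ?thesis by blast
qed

end


lemma one_plus_enat: "1 + enat d = enat (Suc d)"
  by (simp add: one_enat_def)

lemma enat_Suc_le_1plus: "enat (Suc n) \<le> 1 + x \<longleftrightarrow> enat n \<le> (x::enat)"
  by (cases x) (simp_all add: one_enat_def)

lemma sup_lemma:
  assumes ne: "S \<noteq> {}" and c: "enat c \<le> 1 + (SUP P\<in>S. f P)"
  shows "\<exists>P\<in>S. enat c \<le> 1 + (f P :: enat)"
proof (cases c)
  case 0
  obtain P where P: "P \<in> S" using ne by blast
  have "enat c \<le> 1 + f P" using 0 by (simp add: enat_0)
  then show ?thesis using P by blast
next
  case (Suc c')
  have c': "enat c' \<le> (SUP P\<in>S. f P)"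
    using c Suc enat_Suc_le_1plus by simp
  show ?thesis
  proof (cases c')
    case 0
    obtain P where P: "P \<in> S" using ne by blast
    have "enat c \<le> 1 + f P" using Suc 0 enat_Suc_le_1plus by (simp add: enat_0)
    then show ?thesis using P by blast
  next
    case (Suc c'')
    have "enat c'' < enat c'" using Suc by simp
    then have "enat c'' < (SUP P\<in>S. f P)" using c' by (rule less_le_trans)
    then have "\<exists>P\<in>S. enat c'' < f P" by (simp add: less_SUP_iff)
    then obtain P where P: "P \<in> S" "enat c'' < f P" by blast
    then have "eSuc (enat c'') \<le> f P" by (intro ileI1)
    then have "enat c' \<le> f P" using Suc by (simp add: eSuc_enat)
    then have "enat c \<le> 1 + f P" using \<open>c = Suc c'\<close> enat_Suc_le_1plus by simp
    then show ?thesis using P by blast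
  qed
qed

definition pstepG :: "('a \<Rightarrow> 'a \<Rightarrow> (nat \<Rightarrow> 'a) \<Rightarrow> (nat \<Rightarrow> 'a)) \<Rightarrow> (nat \<Rightarrow> 'a) \<Rightarrow> 'a \<Rightarrow> 'a \<Rightarrow> (nat \<Rightarrow> 'a)" where
  "pstepG pun \<pi> u w = (if w = \<pi> 1 then suffix_from 1 \<pi> else pun u w \<pi>)"

fun planr :: "('a \<Rightarrow> 'a \<Rightarrow> (nat \<Rightarrow> 'a) \<Rightarrow> (nat \<Rightarrow> 'a)) \<Rightarrow> (nat \<Rightarrow> 'a) \<Rightarrow> 'a list \<Rightarrow> (nat \<Rightarrow> 'a)" where
  "planr pun r0 [] = r0"
| "planr pun r0 [x] = r0"
| "planr pun r0 (w # u # r) = pstepG pun (planr pun r0 (u # r)) u w"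

definition planG :: "('a \<Rightarrow> 'a \<Rightarrow> (nat \<Rightarrow> 'a) \<Rightarrow> (nat \<Rightarrow> 'a)) \<Rightarrow> (nat \<Rightarrow> 'a) \<Rightarrow> 'a list \<Rightarrow> (nat \<Rightarrow> 'a)" where
  "planG pun r0 g = planr pun r0 (rev g)"

lemma planG_single: "planG pun r0 [x] = r0"
  by (simp add: planG_def)

lemma planG_snoc: "g \<noteq> [] \<Longrightarrow> planG pun r0 (g @ [w]) = pstepG pun (planG pun r0 g) (last g) w"
proof -
  assume ne: "g \<noteq> []"
  then have g: "g = butlast g @ [last g]" by simp
  have r: "rev g = last g # rev (butlast g)" by (subst g) simp
  have "planr pun r0 (w # rev g) = pstepG pun (planr pun r0 (rev g)) (last g) w"
    unfolding r by simp
  then show ?thesis unfolding planG_def by simp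
qed

lemma hd_ext: "g \<noteq> [] \<Longrightarrow> hd (extH ow \<sigma> g n) = hd g"
  by (induction n) auto

locale xc = xg +
  fixes lam :: "'a \<Rightarrow> enat" and x0 :: 'a and \<rho>0 :: "nat \<Rightarrow> 'a"
  assumes x0V: "x0 \<in> Vg"
    and neL: "\<And>w. (x0, w) \<in> Eg\<^sup>* \<Longrightarrow> LamG Vg Eg ow T lam w \<noteq> {}"
    and fixL: "\<And>u w. (x0, u) \<in> Eg\<^sup>* \<Longrightarrow> u \<notin> T (ow u) \<Longrightarrow> (u, w) \<in> Eg \<Longrightarrow>
         lam u \<le> 1 + (SUP \<rho>\<in>LamG Vg Eg ow T lam w. cost (T (ow u)) \<rho>)"
    and r0: "\<rho>0 \<in> LamG Vg Eg ow T lam x0"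
begin

lemma pun_exists:
  assumes u: "(x0, u) \<in> Eg\<^sup>*" and e: "(u, w) \<in> Eg" and pi: "\<pi> \<in> LL lam u"
  shows "\<exists>P. P \<in> LL lam w \<and> (u \<notin> T (ow u) \<longrightarrow> cost (T (ow u)) \<pi> \<le> 1 + cost (T (ow u)) P)"
proof -
  have w: "(x0, w) \<in> Eg\<^sup>*" using u e by (rule rtrancl_into_rtrancl)
  have ne: "LL lam w \<noteq> {}" using neL[OF w] .
  show ?thesis
  proof (cases "u \<in> T (ow u)")
    case True
    then show ?thesis using ne by blast
  next
    case False
    let ?i = "ow u"
    have h: "cost (T ?i) \<pi> \<le> 1 + (SUP \<rho>\<in>LL lam w. cost (T ?i) \<rho>)"
      using LamG_0[OF pi] fixL[OF u False e] by (rule order_trans)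
    show ?thesis
    proof (cases "cost (T ?i) \<pi>")
      case (enat c)
      then obtain P where "P \<in> LL lam w" "enat c \<le> 1 + cost (T ?i) P"
        using sup_lemma[OF ne, of c "\<lambda>\<rho>. cost (T ?i) \<rho>"] h by auto
      then show ?thesis using enat by auto
    next
      case infinity
      then have "1 + (SUP \<rho>\<in>LL lam w. cost (T ?i) \<rho>) = \<infinity>" using h by simp
      then have sinf: "(SUP \<rho>\<in>LL lam w. cost (T ?i) \<rho>) = \<infinity>"
        by (cases "SUP \<rho>\<in>LL lam w. cost (T ?i) \<rho>") (simp_all add: one_enat_def)
      have "\<exists>\<rho>\<in>LL lam w. enat n \<le> cost (T ?i) \<rho>" for n
      proof -
        have "enat n < (SUP \<rho>\<in>LL lam w. cost (T ?i) \<rho>)" using sinf by simp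
        then have "\<exists>\<rho>\<in>LL lam w. enat n < cost (T ?i) \<rho>" by (simp add: less_SUP_iff)
        then obtain \<rho> where "\<rho> \<in> LL lam w" "enat n < cost (T ?i) \<rho>" by blast
        then show ?thesis by (intro bexI[of _ \<rho>]) auto
      qed
      then obtain P where "P \<in> LL lam w" "cost (T ?i) P = \<infinity>" using koenig_Lam by blast
      then show ?thesis by auto
    qed
  qed
qed

definition pun :: "'a \<Rightarrow> 'a \<Rightarrow> (nat \<Rightarrow> 'a) \<Rightarrow> (nat \<Rightarrow> 'a)" where
  "pun u w \<pi> = (SOME P. P \<in> LL lam w \<and> (u \<notin> T (ow u) \<longrightarrow> cost (T (ow u)) \<pi> \<le> 1 + cost (T (ow u)) P))"

lemma pun_prop:
  assumes "(x0, u) \<in> Eg\<^sup>*" "(u, w) \<in> Eg" "\<pi> \<in> LL lam u"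
  shows "pun u w \<pi> \<in> LL lam w \<and> (u \<notin> T (ow u) \<longrightarrow> cost (T (ow u)) \<pi> \<le> 1 + cost (T (ow u)) (pun u w \<pi>))"
  unfolding pun_def using pun_exists[OF assms] by (rule someI_ex)

abbreviation "plan \<equiv> planG pun \<rho>0"

definition sC :: "'a list \<Rightarrow> 'a" where
  "sC g = (if valid g \<and> hd g = x0 then plan g 1 else (SOME w. (last g, w) \<in> Eg))"

lemma plan_inv: "valid g \<Longrightarrow> hd g = x0 \<Longrightarrow> (x0, last g) \<in> Eg\<^sup>* \<and> plan g \<in> LL lam (last g)"
proof (induction g rule: rev_induct)
  case Nil then show ?case by (simp add: is_history_def)
next
  case (snoc x xs)
  show ?case
  proof (cases "xs = []")
    case True
    then show ?thesis using snoc.prems r0 by (simp add: planG_single)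
  next
    case False
    have vx: "valid xs" and e: "(last xs, x) \<in> Eg" using valid_butlast_edge[OF snoc.prems(1) False] by auto
    have hx: "hd xs = x0" using snoc.prems(2) False by simp
    have ih: "(x0, last xs) \<in> Eg\<^sup>*" "plan xs \<in> LL lam (last xs)" using snoc.IH[OF vx hx] by auto
    have r: "(x0, x) \<in> Eg\<^sup>*" using ih(1) e by (rule rtrancl_into_rtrancl)
    have p: "plan (xs @ [x]) = pstepG pun (plan xs) (last xs) x" by (rule planG_snoc[OF False])
    have "plan (xs @ [x]) \<in> LL lam x"
    proof (cases "x = plan xs 1")
      case True
      then have "plan (xs @ [x]) = suffix_from 1 (plan xs)" using p unfolding pstepG_def by simp
      moreover have "suffix_from 1 (plan xs) \<in> LL lam (plan xs 1)" using LamG_suffix[OF ih(2), of 1] .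
      ultimately have A: "plan (xs @ [x]) \<in> LL lam (plan xs 1)" by (simp only:)
      show ?thesis using A True[symmetric] by (simp only:)
    next
      case False
      then have "plan (xs @ [x]) = pun (last xs) x (plan xs)" using p unfolding pstepG_def by simp
      then show ?thesis using pun_prop[OF ih(1) e ih(2)] by simp
    qed
    then show ?thesis using r by (simp only: last_snoc simp_thms)
  qed
qed

lemma sC_valid: "valid g \<Longrightarrow> (last g, sC g) \<in> Eg"
proof (cases "hd g = x0")
  case True
  assume v: "valid g"
  have p: "plan g \<in> LL lam (last g)" using plan_inv[OF v True] by simp
  have "(plan g 0, plan g (Suc 0)) \<in> Eg" using LamG_play[OF p] unfolding is_play_def by blast
  moreover have "plan g 0 = last g" using LamG_start[OF p] .
  ultimately have "(last g, plan g 1) \<in> Eg" by simp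
  then show ?thesis unfolding sC_def using v True by simp
next
  case False
  assume v: "valid g"
  have "\<exists>w. (last g, w) \<in> Eg" using succ valid_last[OF v] by blast
  then have "(last g, SOME w. (last g, w) \<in> Eg) \<in> Eg" by (rule someI_ex)
  then show ?thesis unfolding sC_def using False by simp
qed

lemma sC_eq: "valid g \<Longrightarrow> hd g = x0 \<Longrightarrow> sC g = plan g 1"
  unfolding sC_def by simp

lemma sC_pvalid: "pvalid Vg Eg ow (\<lambda>i. sC)"
  by (rule pvalid_uniform) (rule sC_valid)

lemma follow:
  assumes v: "valid g" and h: "hd g = x0"
  shows "last (extH ow (\<lambda>i. sC) g n) = plan g n \<and> plan (extH ow (\<lambda>i. sC) g n) = suffix_from n (plan g)"
proof (induction n)
  case 0
  have "plan g \<in> LL lam (last g)" using plan_inv[OF v h] by simp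
  then have "plan g 0 = last g" by (rule LamG_start)
  then show ?case by simp
next
  case (Suc n)
  let ?h = "extH ow (\<lambda>i. sC) g n"
  have ne: "g \<noteq> []" using v valid_ne by auto
  have vh: "valid ?h" using ext_valid[OF sC_pvalid v] .
  have hh: "hd ?h = x0" using hd_ext[OF ne] h by simp
  have IH1: "last ?h = plan g n" and IH2: "plan ?h = suffix_from n (plan g)" using Suc by auto
  have p1: "plan ?h 1 = plan g (Suc n)" using IH2 by (simp add: suffix_from_def)
  have s: "sC ?h = plan g (Suc n)" using sC_eq[OF vh hh] p1 by simp
  have hne: "?h \<noteq> []" using ne by simp
  have "plan (?h @ [plan g (Suc n)]) = pstepG pun (plan ?h) (last ?h) (plan g (Suc n))"
    by (rule planG_snoc[OF hne])
  also have "\<dots> = suffix_from 1 (plan ?h)" unfolding pstepG_def using p1 by simp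
  also have "\<dots> = suffix_from (Suc n) (plan g)" using IH2 by (simp add: suffix_from_def)
  finally have c: "plan (?h @ [plan g (Suc n)]) = suffix_from (Suc n) (plan g)" .
  have e: "extH ow (\<lambda>i. sC) g (Suc n) = ?h @ [plan g (Suc n)]" using s by simp
  show ?case unfolding e last_snoc by (intro conjI refl c)
qed

lemma cont_follow:
  assumes v: "valid g" and h: "hd g = x0"
  shows "cont ow (\<lambda>i. sC) g (length g - 1 + n) = plan g n"
proof -
  have ne: "g \<noteq> []" using v valid_ne by auto
  have A: "last (extH ow (\<lambda>i. sC) g n) = plan g n" using follow[OF v h, of n] by blast
  have B: "last (extH ow (\<lambda>i. sC) g n) = cont ow (\<lambda>i. sC) g (length g - 1 + n)" by (rule last_ext[OF ne])
  show ?thesis using A B by (simp only:)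
qed

lemma outcome_sC: "cont ow (\<lambda>i. sC) [x0] = \<rho>0"
proof
  fix n
  have v: "valid [x0]" using valid_single x0V by blast
  have A: "cont ow (\<lambda>i. sC) [x0] (length [x0] - 1 + n) = plan [x0] n" by (rule cont_follow[OF v]) simp
  have B: "length [x0] - 1 + n = n" by simp
  have C: "plan [x0] = \<rho>0" by (rule planG_single)
  show "cont ow (\<lambda>i. sC) [x0] n = \<rho>0 n" using A unfolding B C .
qed

end


context xc
begin

theorem sC_NE:
  assumes g: "valid g" and h: "hd g = x0" and tau: "is_strategy Vg ow Eg i \<tau>"
  shows "cost (T i) (cont ow (\<lambda>i. sC) g) \<le> cost (T i) (cont ow ((\<lambda>i. sC)(i := \<tau>)) g)"
proof -
  define \<sigma>' where "\<sigma>' = (\<lambda>i. sC)(i := \<tau>)"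
  have \<sigma>'a: "\<sigma>' j hh = (if j = i then \<tau> hh else sC hh)" for j hh unfolding \<sigma>'_def by simp
  define \<rho> where "\<rho> = cont ow (\<lambda>i. sC) g"
  define \<rho>' where "\<rho>' = cont ow \<sigma>' g"
  define a where "a = length g - 1"
  have ne: "g \<noteq> []" using g valid_ne by auto
  have pv': "pvalid Vg Eg ow \<sigma>'" unfolding \<sigma>'_def by (rule pvalid_upd[OF sC_pvalid tau])
  have agr: "\<rho> k = \<rho>' k" if "k \<le> a" for k
  proof -
    have "k < length g" using that ne unfolding a_def by (cases g) auto
    then show ?thesis unfolding \<rho>_def \<rho>'_def by (simp add: cont_init)
  qed
  have fol: "\<rho> (a + k) = plan g k" for k unfolding \<rho>_def a_def by (rule cont_follow[OF g h])
  have main: "cost (T i) \<rho> \<le> cost (T i) \<rho>'"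
  proof (cases "cost (T i) \<rho>'")
    case infinity then show ?thesis by simp
  next
    case (enat t)
    show ?thesis
    proof (cases "\<exists>k\<le>a. \<rho> k \<in> T i")
      case True
      then have c: "cost (T i) \<rho> \<le> enat a" unfolding cost_le_iff .
      have ag: "\<forall>k\<le>a. \<rho> k = \<rho>' k" using agr by blast
      have "cost (T i) \<rho>' = cost (T i) \<rho>" by (rule cost_agree[OF ag c])
      then show ?thesis by simp
    next
      case False
      have tt: "\<rho>' t \<in> T i" "\<forall>k<t. \<rho>' k \<notin> T i" using enat[unfolded cost_eq_enat] by blast+
      have at: "a < t"
      proof (rule ccontr)
        assume "\<not> a < t"
        then have "t \<le> a" by simp
        then have "\<rho> t \<in> T i" using agr tt(1) by simp
        then show False using False \<open>t \<le> a\<close> by blast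
      qed
      define hn where "hn m = extH ow \<sigma>' g m" for m
      have hv: "valid (hn m)" for m unfolding hn_def by (rule ext_valid[OF pv' g])
      have hh: "hd (hn m) = x0" for m unfolding hn_def using hd_ext[OF ne] h by simp
      have hl: "last (hn m) = \<rho>' (a + m)" for m unfolding hn_def \<rho>'_def a_def by (rule last_ext[OF ne])
      have key: "\<forall>n. n + d = t \<longrightarrow> a \<le> n \<longrightarrow> cost (T i) (plan (hn (n - a))) \<le> enat d" for d
      proof (induction d)
        case 0
        show ?case
        proof (intro allI impI)
          fix n assume n: "n + 0 = t" "a \<le> n"
          have inv: "plan (hn (n - a)) \<in> LL lam (last (hn (n - a)))" using plan_inv[OF hv hh] by blast
          have "plan (hn (n - a)) 0 = last (hn (n - a))" by (rule LamG_start[OF inv])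
          also have "\<dots> = \<rho>' (a + (n - a))" by (rule hl)
          also have "\<dots> = \<rho>' t" using n by simp
          finally have "plan (hn (n - a)) 0 \<in> T i" using tt(1) by simp
          then have "cost (T i) (plan (hn (n - a))) = 0" by (rule cost_0)
          then show "cost (T i) (plan (hn (n - a))) \<le> enat 0" by (simp add: enat_0)
        qed
      next
        case (Suc d)
        show ?case
        proof (intro allI impI)
          fix n assume n: "n + Suc d = t" "a \<le> n"
          define m where "m = n - a"
          have nm: "n = a + m" using n(2) unfolding m_def by simp
          have sm: "Suc n - a = Suc m" using n(2) unfolding m_def by (simp add: Suc_diff_le)
          have ih: "cost (T i) (plan (hn (Suc m))) \<le> enat d"
            using Suc.IH n sm by (metis add_Suc_shift le_SucI)
          define u where "u = last (hn m)"
          define \<pi> where "\<pi> = plan (hn m)"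
          define x where "x = \<sigma>' (ow u) (hn m)"
          have hs: "hn (Suc m) = hn m @ [x]" unfolding hn_def x_def u_def by simp
          have hne: "hn m \<noteq> []" unfolding hn_def using ne by simp
          have ps: "plan (hn (Suc m)) = pstepG pun \<pi> u x" unfolding hs \<pi>_def u_def by (rule planG_snoc[OF hne])
          have inv: "(x0, u) \<in> Eg\<^sup>*" "\<pi> \<in> LL lam u" using plan_inv[OF hv hh] unfolding u_def \<pi>_def by auto
          have ex: "(u, x) \<in> Eg" using pv' hv[of m] unfolding pvalid_def x_def u_def by blast
          have "n < t" using n(1) by simp
          then have un: "u \<notin> T i" using hl[of m] tt(2) nm unfolding u_def by simp
          have pi0: "\<pi> 0 = u" by (rule LamG_start[OF inv(2)])
          have cs: "cost (T i) \<pi> = 1 + cost (T i) (suffix_from 1 \<pi>)"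
            by (rule cost_Suc) (simp add: pi0 un)
          have goal: "cost (T i) \<pi> \<le> enat (Suc d)"
          proof (cases "x = \<pi> 1")
            case True
            then have "plan (hn (Suc m)) = suffix_from 1 \<pi>" using ps unfolding pstepG_def by simp
            then have "cost (T i) (suffix_from 1 \<pi>) \<le> enat d" using ih by simp
            then have "1 + cost (T i) (suffix_from 1 \<pi>) \<le> 1 + enat d" by (rule add_left_mono)
            then show ?thesis using cs unfolding one_plus_enat by simp
          next
            case False
            have own: "ow u = i"
            proof (rule ccontr)
              assume "ow u \<noteq> i"
              then have "x = sC (hn m)" unfolding x_def \<sigma>'a by simp
              also have "\<dots> = \<pi> 1" unfolding \<pi>_def by (rule sC_eq[OF hv hh])
              finally show False using False by simp
            qed
            have "plan (hn (Suc m)) = pun u x \<pi>" using ps False unfolding pstepG_def by simp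
            moreover have "u \<notin> T (ow u) \<longrightarrow> cost (T (ow u)) \<pi> \<le> 1 + cost (T (ow u)) (pun u x \<pi>)"
              using pun_prop[OF inv(1) ex inv(2)] by blast
            ultimately have "cost (T i) \<pi> \<le> 1 + cost (T i) (plan (hn (Suc m)))" using own un by simp
            also have "\<dots> \<le> 1 + enat d" using ih by (rule add_left_mono)
            finally show ?thesis unfolding one_plus_enat .
          qed
          then show "cost (T i) (plan (hn (n - a))) \<le> enat (Suc d)" unfolding \<pi>_def m_def .
        qed
      qed
      have k0: "cost (T i) (plan (hn (a - a))) \<le> enat (t - a)"
        by (rule key[of "t - a", rule_format]) (use at in simp_all)
      then have k0': "cost (T i) (plan g) \<le> enat (t - a)" unfolding hn_def by simp
      have "\<forall>k<a. \<rho> k \<notin> T i" using False by auto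
      then have c1: "cost (T i) \<rho> = enat a + cost (T i) (suffix_from a \<rho>)" by (rule cost_shift)
      have c2: "suffix_from a \<rho> = plan g" using fol by (auto simp: suffix_from_def)
      have "cost (T i) \<rho> \<le> enat a + enat (t - a)" unfolding c1 c2 using k0' by (rule add_left_mono)
      then show ?thesis using enat at by simp
    qed
  qed
  then show ?thesis unfolding \<rho>_def \<rho>'_def \<sigma>'_def .
qed

end


lemma Lam_LamG: "Lam Pl V own E F lam u = LamG (VertX V Pl) (EdgX Pl E F) (ownX own) (FX V Pl) lam u"
  unfolding Lam_def LamG_def by simp

lemma enat_antitone_const:
  fixes f :: "nat \<Rightarrow> enat"
  assumes "\<And>k. f (Suc k) \<le> f k"
  shows "\<exists>K. \<forall>k\<ge>K. f k = f K"
proof -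
  define m where "m = (LEAST x. x \<in> range f)"
  have "m \<in> range f" unfolding m_def by (rule LeastI[of _ "f 0"]) simp
  then obtain K where K: "f K = m" by auto
  have "\<forall>k\<ge>K. f k = f K"
  proof (intro allI impI)
    fix k assume "K \<le> k"
    then have "f k \<le> f K" using lift_Suc_antimono_le[of f] assms by blast
    moreover have "m \<le> f k" unfolding m_def by (rule Least_le) simp
    ultimately show "f k = f K" using K by simp
  qed
  then show ?thesis by blast
qed

locale conc =
  fixes Pl :: "'p set" and V :: "'v set" and own :: "'v \<Rightarrow> 'p" and E :: "('v \<times> 'v) set"
    and F :: "'p \<Rightarrow> 'v set" and v0 :: 'v and J :: "nat \<Rightarrow> 'p set"
  assumes ar: "arena Pl V own E"
    and FV: "\<forall>i\<in>Pl. F i \<subseteq> V"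
    and v0V: "v0 \<in> V"
    and adm: "admissible_order Pl E F v0 J"
begin

abbreviation "VX \<equiv> VertX V Pl"
abbreviation "EX' \<equiv> EdgX Pl E F"
abbreviation "oX \<equiv> ownX own"
abbreviation "TX \<equiv> FX V Pl"
abbreviation "xx0 \<equiv> x0 Pl F v0"
abbreviation "NN \<equiv> card (calI Pl E F v0)"

lemma finPl: "finite Pl" and finV0: "finite V" and ownPl: "\<forall>v\<in>V. own v \<in> Pl"
  and EV: "E \<subseteq> V \<times> V" and succE: "\<forall>v\<in>V. \<exists>v'. (v, v') \<in> E"
  using ar unfolding arena_def by auto

lemma EX_sub: "EX' \<subseteq> VX \<times> VX"
  unfolding EdgX_def VertX_def using EV by auto

lemma xg_inst: "xg VX EX' TX"
proof
  show "finite VX" unfolding VertX_def using finPl finV0 by simp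
  show "EX' \<subseteq> VX \<times> VX" by (rule EX_sub)
  show "\<forall>u\<in>VX. \<exists>w. (u, w) \<in> EX'"
  proof
    fix u assume "u \<in> VX"
    then obtain v I where u: "u = (v, I)" "v \<in> V" "I \<subseteq> Pl" unfolding VertX_def by auto
    then obtain v' where "(v, v') \<in> E" using succE by blast
    then have "(u, (v', I \<union> {i \<in> Pl. v' \<in> F i})) \<in> EX'" using u unfolding EdgX_def by auto
    then show "\<exists>w. (u, w) \<in> EX'" by blast
  qed
  fix u w i
  assume e: "(u, w) \<in> EX'" and t: "u \<in> TX i"
  have "w \<in> VX" using e EX_sub by auto
  moreover have "snd u \<subseteq> snd w" using e unfolding EdgX_def by auto
  ultimately show "w \<in> TX i" using t unfolding FX_def by auto
qed

sublocale xg VX EX' oX TX by (rule xg_inst)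

lemma x0_VX: "xx0 \<in> VX"
  unfolding x0_def VertX_def using v0V by auto

lemma reach_VX: "(xx0, u) \<in> EX'\<^sup>* \<Longrightarrow> u \<in> VX"
  by (induction rule: rtrancl_induct) (use x0_VX EX_sub in auto)

lemma T_iff: "u \<in> VX \<Longrightarrow> u \<in> TX i \<longleftrightarrow> i \<in> snd u"
  unfolding FX_def by simp

lemma calI_sub: "calI Pl E F v0 \<subseteq> Pow Pl"
  unfolding calI_def using reach_VX unfolding VertX_def by auto

lemma calI_fin: "finite (calI Pl E F v0)"
  using calI_sub finPl finite_subset by (metis finite_Pow_iff)

lemma N_pos: "NN \<ge> 1"
proof -
  have "snd xx0 \<in> calI Pl E F v0" unfolding calI_def by (auto simp: x0_def)
  then have "calI Pl E F v0 \<noteq> {}" by blast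
  then show ?thesis using calI_fin by (simp add: Suc_le_eq card_gt_0_iff)
qed

lemma reach_Vge: assumes "(xx0, u) \<in> EX'\<^sup>*" shows "u \<in> Vge V J NN 1"
proof -
  obtain v I where u: "u = (v, I)" by (cases u)
  have "u \<in> VX" using reach_VX assms by blast
  then have v: "v \<in> V" using u unfolding VertX_def by auto
  have "I \<in> calI Pl E F v0" unfolding calI_def using assms u by blast
  moreover have "J ` {1..NN} = calI Pl E F v0" using adm unfolding admissible_order_def bij_betw_def by blast
  ultimately obtain m where m: "m \<in> {1..NN}" "J m = I" by (metis imageE)
  then show ?thesis unfolding Vge_def using u v by auto
qed

abbreviation "upd \<equiv> lam_update Pl V own E F J NN"
definition "ll k = fst (lam_seq Pl V own E F v0 J k)"
definition "nn k = snd (lam_seq Pl V own E F v0 J k)"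

lemma ll0: "ll 0 = lam0 own" and nn0: "nn 0 = NN"
  unfolding ll_def nn_def by simp_all

lemma llS: "ll (Suc k) = upd (ll k) (nn k)"
  unfolding ll_def nn_def by (simp add: case_prod_beta Let_def)

lemma nnS: "nn (Suc k) = (if ll (Suc k) = ll k \<and> nn k > 1 then nn k - 1 else nn k)"
  unfolding ll_def nn_def by (simp add: case_prod_beta Let_def)

lemma upd_mono:
  assumes "\<And>u. l1 u \<le> l2 u"
  shows "upd l1 n u \<le> upd l2 n u"
proof -
  have L: "Lam Pl V own E F l1 w \<subseteq> Lam Pl V own E F l2 w" for w
    unfolding Lam_def using assms order_trans by blast
  have S: "(SUP \<rho>\<in>Lam Pl V own E F l1 w. cost (TX i) \<rho>) \<le> (SUP \<rho>\<in>Lam Pl V own E F l2 w. cost (TX i) \<rho>)" for w i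
    by (rule SUP_subset_mono[OF L]) simp
  have I: "(INF w\<in>W. SUP \<rho>\<in>Lam Pl V own E F l1 w. cost (TX i) \<rho>) \<le> (INF w\<in>W. SUP \<rho>\<in>Lam Pl V own E F l2 w. cost (TX i) \<rho>)" for W i
    by (rule INF_mono'[OF S])
  show ?thesis unfolding lam_update_def using assms I add_left_mono by auto
qed

lemma upd_same: "u \<in> Vge V J NN n1 \<Longrightarrow> u \<in> Vge V J NN n2 \<Longrightarrow> upd l n1 u = upd l n2 u"
  unfolding lam_update_def by simp

lemma upd_out: "u \<notin> Vge V J NN n \<Longrightarrow> upd l n u = l u"
  unfolding lam_update_def by simp

lemma Vge_anti: "m \<le> n \<Longrightarrow> Vge V J NN n \<subseteq> Vge V J NN m"
  unfolding Vge_def by (auto intro: le_trans)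

lemma nn_le: "nn (Suc k) \<le> nn k"
  using nnS[of k] by simp

lemma nn_pos: "nn k \<ge> 1"
proof (induction k)
  case 0 then show ?case using N_pos nn0 by simp
next
  case (Suc k) then show ?case using nnS[of k] by auto
qed

lemma nn_leN: "nn k \<le> NN"
proof (induction k)
  case 0 then show ?case using nn0 by simp
next
  case (Suc k) then show ?case using nn_le[of k] by simp
qed

lemma Q: "u \<notin> Vge V J NN (nn k) \<Longrightarrow> ll k u = lam0 own u"
proof (induction k)
  case 0 then show ?case using ll0 by simp
next
  case (Suc k)
  have "Vge V J NN (nn k) \<subseteq> Vge V J NN (nn (Suc k))" by (rule Vge_anti[OF nn_le])
  then have "u \<notin> Vge V J NN (nn k)" using Suc.prems by blast
  then show ?case using Suc.IH llS upd_out by simp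
qed

lemma lam0_cases: "lam0 own u = 0 \<and> oX u \<in> snd u \<or> lam0 own u = \<infinity> \<and> oX u \<notin> snd u"
  unfolding lam0_def by auto

lemma upd_le_lam0: "u \<notin> Vge V J NN n \<Longrightarrow> l u = lam0 own u \<Longrightarrow> upd l n' u \<le> lam0 own u"
  unfolding lam_update_def using lam0_cases[of u] by auto

lemma D: "ll (Suc k) u \<le> ll k u"
proof (induction k arbitrary: u)
  case 0
  show ?case unfolding llS ll0 unfolding lam_update_def using lam0_cases[of u] by auto
next
  case (Suc k)
  show ?case
  proof (cases "nn (Suc k) = nn k")
    case True
    have "ll (Suc (Suc k)) u = upd (ll (Suc k)) (nn k) u" using llS True by simp
    also have "\<dots> \<le> upd (ll k) (nn k) u" by (rule upd_mono) (rule Suc.IH)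
    also have "\<dots> = ll (Suc k) u" using llS by simp
    finally show ?thesis .
  next
    case False
    then have eq: "ll (Suc k) = ll k" and nk: "nn (Suc k) = nn k - 1" using nnS[of k] by (auto split: if_splits)
    show ?thesis
    proof (cases "u \<in> Vge V J NN (nn k)")
      case True
      have "u \<in> Vge V J NN (nn (Suc k))" using True Vge_anti[OF nn_le[of k]] by blast
      then have "ll (Suc (Suc k)) u = upd (ll (Suc k)) (nn k) u" using llS upd_same True by metis
      also have "\<dots> = upd (ll k) (nn k) u" using eq by simp
      also have "\<dots> = ll (Suc k) u" using llS by simp
      finally show ?thesis by simp
    next
      case False
      then have l0: "ll k u = lam0 own u" by (rule Q)
      have "ll (Suc (Suc k)) u = upd (ll (Suc k)) (nn (Suc k)) u" by (rule llS[THEN fun_cong])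
      also have "\<dots> \<le> lam0 own u" by (rule upd_le_lam0[OF False]) (use eq l0 in simp)
      also have "\<dots> = ll (Suc k) u" using eq l0 by simp
      finally show ?thesis .
    qed
  qed
qed

lemma Vge0_fin: "finite (Vge V J NN 0)"
proof -
  have "Vge V J NN 0 \<subseteq> (\<lambda>(v, m). (v, J m)) ` (V \<times> {0..NN})" unfolding Vge_def by auto
  then show ?thesis using finV0 finite_subset by blast
qed

lemma stable: "\<exists>K. \<forall>k\<ge>K. ll k = ll K"
proof -
  have "\<forall>u\<in>Vge V J NN 0. \<exists>K. \<forall>k\<ge>K. ll k u = ll K u"
    using enat_antitone_const[of "\<lambda>k. ll k u" for u] D by blast
  then obtain f where f: "\<forall>u\<in>Vge V J NN 0. \<forall>k\<ge>f u. ll k u = ll (f u) u"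
    by (rule bchoice[elim_format]) blast
  define K where "K = (\<Sum>u\<in>Vge V J NN 0. f u)"
  have "\<forall>k\<ge>K. ll k = ll K"
  proof (intro allI impI)
    fix k assume k: "K \<le> k"
    show "ll k = ll K"
    proof
      fix u
      show "ll k u = ll K u"
      proof (cases "u \<in> Vge V J NN 0")
        case True
        have "f u \<le> K" unfolding K_def using True Vge0_fin by (intro member_le_sum) auto
        then show ?thesis using f True k by (metis le_trans)
      next
        case False
        then have "u \<notin> Vge V J NN (nn j)" for j using Vge_anti[of 0 "nn j"] by blast
        then show ?thesis using Q by metis
      qed
    qed
  qed
  then show ?thesis by blast
qed

definition "KK = (SOME K. \<forall>k\<ge>K. ll k = ll K)"

lemma KK: "\<forall>k\<ge>KK. ll k = ll KK"
  unfolding KK_def using stable by (rule someI_ex)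

lemma lam_star_eq: "lam_star Pl V own E F v0 J = ll KK"
proof -
  have "(THE l. \<exists>K. \<forall>k\<ge>K. ll k = l) = ll KK"
  proof (rule the_equality)
    show "\<exists>K. \<forall>k\<ge>K. ll k = ll KK" using KK by blast
  next
    fix l assume "\<exists>K. \<forall>k\<ge>K. ll k = l"
    then obtain K where K: "\<forall>k\<ge>K. ll k = l" by blast
    have a1: "ll (max K KK) = l" using K max.cobounded1 by blast
    have a2: "ll (max K KK) = ll KK" using KK max.cobounded2 by blast
    show "l = ll KK" using a1 a2 by simp
  qed
  then show ?thesis unfolding lam_star_def ll_def by simp
qed

lemma reach_one: "\<exists>k. nn k = 1 \<and> ll (Suc k) = ll k \<and> ll k = ll KK"
proof -
  have st: "ll (Suc k) = ll k" if "k \<ge> KK" for k using KK that by (metis le_SucI)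
  have "nn (KK + j) = 1 \<or> nn (KK + j) + j \<le> nn KK" for j
  proof (induction j)
    case 0 then show ?case by simp
  next
    case (Suc j)
    have s: "ll (Suc (KK + j)) = ll (KK + j)" by (rule st) (rule le_add1)
    show ?case
    proof (cases "nn (KK + j) = 1")
      case True
      then have "nn (Suc (KK + j)) = 1" using nnS[of "KK + j"] by simp
      then show ?thesis by simp
    next
      case False
      then have g1: "nn (KK + j) > 1" using nn_pos[of "KK + j"] by simp
      then have "nn (Suc (KK + j)) = nn (KK + j) - 1" using nnS[of "KK + j"] s by simp
      then show ?thesis using Suc False g1 by auto
    qed
  qed
  then have "nn (KK + NN) = 1 \<or> nn (KK + NN) + NN \<le> nn KK" .
  moreover have "nn KK \<le> NN" by (rule nn_leN)
  moreover have "nn (KK + NN) \<ge> 1" by (rule nn_pos)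
  ultimately have "nn (KK + NN) = 1" by linarith
  moreover have "ll (Suc (KK + NN)) = ll (KK + NN)" by (rule st) (rule le_add1)
  moreover have "ll (KK + NN) = ll KK" using KK le_add1 by blast
  ultimately show ?thesis by blast
qed

lemma fixpoint: "upd (ll KK) 1 = ll KK"
proof -
  obtain k where k: "nn k = 1" "ll (Suc k) = ll k" "ll k = ll KK" using reach_one by blast
  have "upd (ll KK) 1 = ll (Suc k)" using llS[of k] k by simp
  then show ?thesis using k by simp
qed

lemma fixL_conc:
  assumes r: "(xx0, u) \<in> EX'\<^sup>*" and nt: "u \<notin> TX (oX u)" and e: "(u, w) \<in> EX'"
  shows "ll KK u \<le> 1 + (SUP \<rho>\<in>LamG VX EX' oX TX (ll KK) w. cost (TX (oX u)) \<rho>)"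
proof -
  have uV: "u \<in> Vge V J NN 1" by (rule reach_Vge[OF r])
  have "u \<in> VX" using reach_VX r by blast
  then have ns: "oX u \<notin> snd u" using nt T_iff by blast
  have "ll KK u = upd (ll KK) 1 u" using fixpoint by simp
  also have "\<dots> = 1 + (INF u'\<in>{u'. (u, u') \<in> EX'}. SUP \<rho>\<in>Lam Pl V own E F (ll KK) u'. cost (TX (oX u)) \<rho>)"
    unfolding lam_update_def using uV ns by simp
  also have "\<dots> \<le> 1 + (SUP \<rho>\<in>Lam Pl V own E F (ll KK) w. cost (TX (oX u)) \<rho>)"
    by (rule add_left_mono, rule INF_lower) (use e in simp)
  finally show ?thesis unfolding Lam_LamG .
qed

end


lemma dev_ext:
  assumes "g \<noteq> []" "o' (last g) = j" "\<tau> g = w" "\<And>h. length h > length g \<Longrightarrow> \<tau> h = s h"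
  shows "extH o' ((\<lambda>i. s)(j := \<tau>)) g (Suc n) = extH o' (\<lambda>i. s) (g @ [w]) n"
proof (induction n)
  case 0
  then show ?case using assms by simp
next
  case (Suc n)
  let ?H = "extH o' (\<lambda>i. s) (g @ [w]) n"
  have len: "length ?H > length g" by simp
  have "((\<lambda>i. s)(j := \<tau>)) x ?H = s ?H" for x using assms(4)[OF len] by simp
  then show ?case using Suc by simp
qed

lemma dev_cont:
  assumes "g \<noteq> []" "o' (last g) = j" "\<tau> g = w" "\<And>h. length h > length g \<Longrightarrow> \<tau> h = s h"
  shows "cont o' ((\<lambda>i. s)(j := \<tau>)) g = cont o' (\<lambda>i. s) (g @ [w])"
proof
  fix k
  have "cont o' ((\<lambda>i. s)(j := \<tau>)) g k = extH o' ((\<lambda>i. s)(j := \<tau>)) g (Suc k) ! k"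
    using assms(1) by (intro cont_ext_nth') auto
  also have "extH o' ((\<lambda>i. s)(j := \<tau>)) g (Suc k) = extH o' (\<lambda>i. s) (g @ [w]) k"
    by (rule dev_ext) (use assms in auto)
  also have "\<dots> ! k = cont o' (\<lambda>i. s) (g @ [w]) k" unfolding cont_def by simp
  finally show "cont o' ((\<lambda>i. s)(j := \<tau>)) g k = cont o' (\<lambda>i. s) (g @ [w]) k" .
qed

lemma Inf_attained:
  fixes f :: "'a \<Rightarrow> enat"
  assumes "S \<noteq> {}"
  shows "\<exists>x\<in>S. (INF x\<in>S. f x) = f x"
proof -
  have "f ` S \<noteq> {}" using assms by simp
  then have "Inf (f ` S) = (LEAST y. y \<in> f ` S)" unfolding Inf_enat_def by simp
  moreover have "(LEAST y. y \<in> f ` S) \<in> f ` S" using \<open>f ` S \<noteq> {}\<close> by (metis LeastI ex_in_conv)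
  ultimately show ?thesis by auto
qed

context xg
begin

lemma dev_bound:
  assumes g': "valid g'" and nt: "last g' \<notin> T j" and ow: "ow (last g') = j" and e: "(last g', w) \<in> Eg"
  shows "cost (T j) (suffix_from (length g' - 1) (cont ow (\<lambda>i. sL) g'))
         \<le> 1 + cost (T j) (suffix_from (length g') (cont ow (\<lambda>i. sL) (g' @ [w])))"
proof -
  let ?s = "\<lambda>i. sL"
  define \<tau> where "\<tau> h = (if h = g' then w else sL h)" for h
  have ne: "g' \<noteq> []" using g' valid_ne by auto
  have tau: "is_strategy Vg ow Eg j \<tau>"
    unfolding is_strategy_def \<tau>_def using e sL_valid by auto
  have spe: "cost (T j) (cont ow ?s g') \<le> cost (T j) (cont ow (?s(j := \<tau>)) g')"
    by (rule sL_SPE[OF g' tau])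
  have dc: "cont ow (?s(j := \<tau>)) g' = cont ow ?s (g' @ [w])"
    by (rule dev_cont[where s=sL]) (use ne ow in \<open>auto simp: \<tau>_def\<close>)
  define a where "a = length g' - 1"
  have pl: "is_play Vg Eg (cont ow ?s g')" by (rule cont_play[OF sL_pvalid g'])
  have la: "cont ow ?s g' a = last g'" unfolding a_def by (rule cont_ext_last[OF ne])
  have nh1: "\<forall>k<a. cont ow ?s g' k \<notin> T j"
  proof (intro allI impI notI)
    fix k assume "k < a" "cont ow ?s g' k \<in> T j"
    then have "cont ow ?s g' a \<in> T j" using play_upw[OF pl, of k a j] by simp
    then show False using la nt by simp
  qed
  have eqp: "cont ow ?s (g' @ [w]) k = cont ow ?s g' k" if "k \<le> a" for k
  proof -
    have "k < length g'" using that ne unfolding a_def by (cases g') auto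
    then show ?thesis by (simp add: cont_init nth_append)
  qed
  have nh2: "\<forall>k<a. cont ow ?s (g' @ [w]) k \<notin> T j" using nh1 eqp by simp
  have c1: "cost (T j) (cont ow ?s g') = enat a + cost (T j) (suffix_from a (cont ow ?s g'))"
    by (rule cost_shift[OF nh1])
  have c2: "cost (T j) (cont ow ?s (g' @ [w])) = enat a + cost (T j) (suffix_from a (cont ow ?s (g' @ [w])))"
    by (rule cost_shift[OF nh2])
  have "enat a + cost (T j) (suffix_from a (cont ow ?s g')) \<le> enat a + cost (T j) (suffix_from a (cont ow ?s (g' @ [w])))"
    using spe dc c1 c2 by simp
  then have le: "cost (T j) (suffix_from a (cont ow ?s g')) \<le> cost (T j) (suffix_from a (cont ow ?s (g' @ [w])))"
    unfolding enat_add_left_cancel_le by simp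
  have z: "suffix_from a (cont ow ?s (g' @ [w])) 0 \<notin> T j" using eqp[of a] la nt by simp
  have c3a: "cost (T j) (suffix_from a (cont ow ?s (g' @ [w]))) = 1 + cost (T j) (suffix_from 1 (suffix_from a (cont ow ?s (g' @ [w]))))"
    by (rule cost_Suc) (rule z)
  have c3b: "suffix_from 1 (suffix_from a (cont ow ?s (g' @ [w]))) = suffix_from (length g') (cont ow ?s (g' @ [w]))"
    using ne unfolding a_def by (cases g') auto
  have c3: "cost (T j) (suffix_from a (cont ow ?s (g' @ [w]))) = 1 + cost (T j) (suffix_from (length g') (cont ow ?s (g' @ [w])))"
    using c3a unfolding c3b .
  have "cost (T j) (suffix_from a (cont ow ?s g')) \<le> 1 + cost (T j) (suffix_from (length g') (cont ow ?s (g' @ [w])))"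
    using le c3 by (rule ord_le_eq_trans)
  then show ?thesis unfolding a_def .
qed

end

context conc
begin

lemma cons_all:
  "valid g \<Longrightarrow> suffix_from (length g - 1) (cont oX (\<lambda>i. sL) g) \<in> LamG VX EX' oX TX (ll k) (last g)"
proof (induction k arbitrary: g)
  case 0
  let ?\<rho> = "suffix_from (length g - 1) (cont oX (\<lambda>i. sL) g)"
  have ne: "g \<noteq> []" using 0 valid_ne by auto
  have pl: "is_play VX EX' ?\<rho>" using cont_play[OF sL_pvalid 0] unfolding is_play_def by simp
  have st: "?\<rho> 0 = last g" using cont_ext_last[OF ne] by simp
  have "cost (TX (oX (?\<rho> n))) (suffix_from n ?\<rho>) \<le> ll 0 (?\<rho> n)" for n
  proof (cases "oX (?\<rho> n) \<in> snd (?\<rho> n)")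
    case True
    have "?\<rho> n \<in> VX" using pl unfolding is_play_def by blast
    then have "?\<rho> n \<in> TX (oX (?\<rho> n))" using True T_iff by blast
    then have "cost (TX (oX (?\<rho> n))) (suffix_from n ?\<rho>) = 0" by (intro cost_0) simp
    then show ?thesis by simp
  next
    case False
    then show ?thesis unfolding ll0 lam0_def by simp
  qed
  then show ?case unfolding LamG_def using pl st by blast
next
  case (Suc k)
  let ?s = "\<lambda>i. sL"
  let ?\<rho> = "suffix_from (length g - 1) (cont oX ?s g)"
  have ne: "g \<noteq> []" using Suc.prems valid_ne by auto
  have pl: "is_play VX EX' ?\<rho>" using cont_play[OF sL_pvalid Suc.prems] unfolding is_play_def by simp
  have st: "?\<rho> 0 = last g" using cont_ext_last[OF ne] by simp
  have IHg: "?\<rho> \<in> LamG VX EX' oX TX (ll k) (last g)" by (rule Suc.IH[OF Suc.prems])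
  have "cost (TX (oX (?\<rho> n))) (suffix_from n ?\<rho>) \<le> ll (Suc k) (?\<rho> n)" for n
  proof -
    define u where "u = ?\<rho> n"
    define j where "j = oX u"
    have uV: "u \<in> VX" using pl unfolding is_play_def u_def by blast
    have G: "cost (TX j) (suffix_from n ?\<rho>) \<le> ll (Suc k) u"
    proof (cases "u \<in> Vge V J NN (nn k)")
      case False
      then have "ll (Suc k) u = ll k u" using llS upd_out by simp
      moreover have "cost (TX j) (suffix_from n ?\<rho>) \<le> ll k u"
        using IHg unfolding LamG_def u_def j_def by blast
      ultimately show ?thesis by simp
    next
      case inV: True
      show ?thesis
      proof (cases "j \<in> snd u")
        case True
        then have "u \<in> TX j" using T_iff uV by blast
        then have "cost (TX j) (suffix_from n ?\<rho>) = 0" by (intro cost_0) (simp add: u_def)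
        then show ?thesis by simp
      next
        case False
        define W where "W = {u'. (u, u') \<in> EX'}"
        define f where "f w = (SUP \<rho>\<in>Lam Pl V own E F (ll k) w. cost (TX j) \<rho>)" for w
        have val: "ll (Suc k) u = 1 + (INF w\<in>W. f w)"
          unfolding llS lam_update_def W_def f_def j_def using inV False unfolding j_def by simp
        have "W \<noteq> {}" unfolding W_def using succ uV by blast
        then obtain w where w: "w \<in> W" "(INF w\<in>W. f w) = f w" using Inf_attained[of W f] by blast
        have e: "(u, w) \<in> EX'" using w(1) unfolding W_def by simp
        define g' where "g' = extH oX ?s g n"
        have vg': "valid g'" unfolding g'_def by (rule ext_valid[OF sL_pvalid Suc.prems])
        have lg': "last g' = u" unfolding g'_def u_def using last_ext[OF ne] by simp
        have len: "length g' - 1 = length g - 1 + n" unfolding g'_def using ne by (cases g) auto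
        have cc: "cont oX ?s g' = cont oX ?s g" unfolding g'_def by (rule cont_cont[OF ne])
        have nt: "last g' \<notin> TX j" using lg' False T_iff uV by blast
        have db: "cost (TX j) (suffix_from (length g' - 1) (cont oX ?s g'))
           \<le> 1 + cost (TX j) (suffix_from (length g') (cont oX ?s (g' @ [w])))"
          by (rule dev_bound[OF vg' nt]) (use lg' j_def e in simp_all)
        have l1: "suffix_from (length g' - 1) (cont oX ?s g') = suffix_from n ?\<rho>"
          unfolding len cc by simp
        have vw: "valid (g' @ [w])" using valid_snoc[OF vg'] e lg' by simp
        have pi: "suffix_from (length g') (cont oX ?s (g' @ [w])) \<in> LamG VX EX' oX TX (ll k) w"
        proof -
          have "suffix_from (length (g' @ [w]) - 1) (cont oX ?s (g' @ [w])) \<in> LamG VX EX' oX TX (ll k) (last (g' @ [w]))"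
            by (rule Suc.IH[OF vw])
          then show ?thesis by (simp only: length_append_singleton diff_Suc_1 last_snoc)
        qed
        have "cost (TX j) (suffix_from (length g') (cont oX ?s (g' @ [w]))) \<le> f w"
          unfolding f_def Lam_LamG by (rule SUP_upper[OF pi])
        then have "1 + cost (TX j) (suffix_from (length g') (cont oX ?s (g' @ [w]))) \<le> 1 + f w"
          by (rule add_left_mono)
        with db have "cost (TX j) (suffix_from (length g' - 1) (cont oX ?s g')) \<le> 1 + f w"
          by (rule order_trans)
        then have "cost (TX j) (suffix_from n ?\<rho>) \<le> 1 + f w" by (simp only: l1)
        then show ?thesis using val w(2) by simp
      qed
    qed
    then show ?thesis unfolding u_def j_def .
  qed
  then show ?case unfolding LamG_def using pl st by blast
qed

lemma neL_conc: "(xx0, w) \<in> EX'\<^sup>* \<Longrightarrow> LamG VX EX' oX TX (ll KK) w \<noteq> {}"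
proof -
  assume r: "(xx0, w) \<in> EX'\<^sup>*"
  then have "w \<in> VX" by (rule reach_VX)
  then have v: "valid [w]" by (rule valid_single)
  show ?thesis using cons_all[OF v, of KK] by auto
qed

end


lemma ext_cong:
  assumes "\<And>j hh. hh \<noteq> [] \<Longrightarrow> s1 j hh = s2 j hh" "g \<noteq> []"
  shows "extH o' s1 g n = extH o' s2 g n"
proof (induction n)
  case 0 then show ?case by simp
next
  case (Suc n)
  have "extH o' s1 g n \<noteq> []" using assms(2) by simp
  then show ?case using Suc assms(1) by simp
qed

lemma outcome_cong:
  assumes "\<And>j hh. hh \<noteq> [] \<Longrightarrow> s1 j hh = s2 j hh"
  shows "outcome o' s1 v = outcome o' s2 v"
proof -
  have "extH o' s1 [v] n = extH o' s2 [v] n" for n by (rule ext_cong) (use assms in auto)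
  then show ?thesis unfolding outcome_cont cont_def by simp
qed

context xg
begin

lemma valid_drop:
  assumes v: "valid g" and k: "k < length g"
  shows "valid (drop k g)"
proof -
  have a1: "drop k g \<noteq> []" using k by simp
  have sg: "set g \<subseteq> Vg" using v unfolding is_history_def by simp
  have a2: "set (drop k g) \<subseteq> Vg" using sg set_drop_subset[of k g] by (rule subset_trans[rotated])
  have a3: "\<forall>m. Suc m < length (drop k g) \<longrightarrow> (drop k g ! m, drop k g ! Suc m) \<in> Eg"
  proof (intro allI impI)
    fix m assume m: "Suc m < length (drop k g)"
    then have "Suc (k + m) < length g" by simp
    then have "(g ! (k + m), g ! Suc (k + m)) \<in> Eg" using valid_edge[OF v] by blast
    then show "(drop k g ! m, drop k g ! Suc m) \<in> Eg" using m by simp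
  qed
  show ?thesis unfolding is_history_def using a1 a2 a3 by blast
qed

end

theorem proposition2p14:
  fixes Pl :: "'p set" and V :: "'v set" and own :: "'v \<Rightarrow> 'p" and E :: "('v \<times> 'v) set"
    and F :: "'p \<Rightarrow> 'v set" and v0 :: 'v and J :: "nat \<Rightarrow> 'p set"
    and \<rho>0 :: "nat \<Rightarrow> 'v \<times> 'p set"
  assumes "arena Pl V own E"
    and "\<forall>i\<in>Pl. F i \<subseteq> V"
    and "v0 \<in> V"
    and "admissible_order Pl E F v0 J"
    and "\<rho>0 \<in> Lam_star Pl V own E F v0 J (x0 Pl F v0)"
  shows "\<exists>\<sigma>. is_profile Pl (VertX V Pl) (ownX own) (EdgX Pl E F) \<sigma>
           \<and> is_SPE Pl (VertX V Pl) (ownX own) (EdgX Pl E F) (FX V Pl) \<sigma> (x0 Pl F v0)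
           \<and> outcome (ownX own) \<sigma> (x0 Pl F v0) = \<rho>0"
proof -
  interpret C: conc Pl V own E F v0 J by (rule conc.intro) (fact assms)+
  have r0: "\<rho>0 \<in> LamG (VertX V Pl) (EdgX Pl E F) (ownX own) (FX V Pl) (C.ll C.KK) (x0 Pl F v0)"
    using assms(5) unfolding Lam_star_def C.lam_star_eq Lam_LamG .
  have xc: "xc (VertX V Pl) (EdgX Pl E F) (ownX own) (FX V Pl) (C.ll C.KK) (x0 Pl F v0) \<rho>0"
  proof (rule xc.intro[OF C.xg_inst], rule xc_axioms.intro)
    show "x0 Pl F v0 \<in> VertX V Pl" by (rule C.x0_VX)
    show "\<And>w. (x0 Pl F v0, w) \<in> (EdgX Pl E F)\<^sup>* \<Longrightarrow> LamG (VertX V Pl) (EdgX Pl E F) (ownX own) (FX V Pl) (C.ll C.KK) w \<noteq> {}"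
      by (rule C.neL_conc)
    show "\<And>u w. (x0 Pl F v0, u) \<in> (EdgX Pl E F)\<^sup>* \<Longrightarrow> u \<notin> FX V Pl (ownX own u) \<Longrightarrow> (u, w) \<in> EdgX Pl E F \<Longrightarrow>
         C.ll C.KK u \<le> 1 + (SUP \<rho>\<in>LamG (VertX V Pl) (EdgX Pl E F) (ownX own) (FX V Pl) (C.ll C.KK) w. cost (FX V Pl (ownX own u)) \<rho>)"
      by (rule C.fixL_conc)
    show "\<rho>0 \<in> LamG (VertX V Pl) (EdgX Pl E F) (ownX own) (FX V Pl) (C.ll C.KK) (x0 Pl F v0)" by (rule r0)
  qed
  interpret X: xc "VertX V Pl" "EdgX Pl E F" "ownX own" "FX V Pl" "C.ll C.KK" "x0 Pl F v0" \<rho>0 by (rule xc)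
  define \<sigma> where "\<sigma> = (\<lambda>i::'p. X.sC)"
  have prof: "is_profile Pl (VertX V Pl) (ownX own) (EdgX Pl E F) \<sigma>"
    unfolding is_profile_def \<sigma>_def using C.uniform_strategy X.sC_valid by blast
  have out: "outcome (ownX own) \<sigma> (x0 Pl F v0) = \<rho>0"
    unfolding outcome_cont \<sigma>_def by (rule X.outcome_sC)
  have spe: "is_SPE Pl (VertX V Pl) (ownX own) (EdgX Pl E F) (FX V Pl) \<sigma> (x0 Pl F v0)"
    unfolding is_SPE_def is_NE_def
  proof (intro allI impI ballI)
    fix h v i \<tau>
    assume hv: "is_history (VertX V Pl) (EdgX Pl E F) (h @ [v]) \<and> hd (h @ [v]) = x0 Pl F v0"
      and i: "i \<in> Pl" and tau: "is_strategy (VertX V Pl) (ownX own) (EdgX Pl E F) i \<tau>"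
    define \<tau>' where "\<tau>' g = (if length h < length g \<and> take (length h) g = h then \<tau> (drop (length h) g) else X.sC g)" for g
    define \<sigma>' where "\<sigma>' = \<sigma>(i := \<tau>')"
    have tau': "is_strategy (VertX V Pl) (ownX own) (EdgX Pl E F) i \<tau>'"
      unfolding is_strategy_def
    proof (intro allI impI)
      fix g assume g: "is_history (VertX V Pl) (EdgX Pl E F) g \<and> ownX own (last g) = i"
      show "(last g, \<tau>' g) \<in> EdgX Pl E F"
      proof (cases "length h < length g \<and> take (length h) g = h")
        case True
        have vd: "is_history (VertX V Pl) (EdgX Pl E F) (drop (length h) g)" using C.valid_drop g True by blast
        have ld: "last (drop (length h) g) = last g" using True by simp
        then have "(last (drop (length h) g), \<tau> (drop (length h) g)) \<in> EdgX Pl E F"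
          using tau vd g unfolding is_strategy_def by metis
        moreover have "\<tau>' g = \<tau> (drop (length h) g)" unfolding \<tau>'_def using True by (rule if_P)
        ultimately show ?thesis using ld by simp
      next
        case False
        have "\<tau>' g = X.sC g" unfolding \<tau>'_def using False by (rule if_not_P)
        then show ?thesis using X.sC_valid g by simp
      qed
    qed
    have ne: "\<And>j hh. hh \<noteq> [] \<Longrightarrow> (\<lambda>j h'. \<sigma>' j (h @ h')) j hh = ((\<lambda>j h'. \<sigma> j (h @ h'))(i := \<tau>)) j hh"
      unfolding \<sigma>'_def \<tau>'_def \<sigma>_def by auto
    have eq2: "outcome (ownX own) ((\<lambda>j h'. \<sigma> j (h @ h'))(i := \<tau>)) v = outcome (ownX own) (\<lambda>j h'. \<sigma>' j (h @ h')) v"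
      by (rule outcome_cong[symmetric]) (rule ne)
    have NE: "cost (FX V Pl i) (cont (ownX own) (\<lambda>i. X.sC) (h @ [v]))
        \<le> cost (FX V Pl i) (cont (ownX own) ((\<lambda>i. X.sC)(i := \<tau>')) (h @ [v]))"
      using X.sC_NE[of "h @ [v]" i \<tau>'] hv tau' by blast
    have L: "prepend h (outcome (ownX own) (\<lambda>j h'. \<sigma> j (h @ h')) v) = cont (ownX own) \<sigma> (h @ [v])"
      by (rule cont_restr[symmetric])
    have R: "prepend h (outcome (ownX own) ((\<lambda>j h'. \<sigma> j (h @ h'))(i := \<tau>)) v) = cont (ownX own) \<sigma>' (h @ [v])"
      unfolding eq2 by (rule cont_restr[symmetric])
    show "cost (FX V Pl i) (prepend h (outcome (ownX own) (\<lambda>j h'. \<sigma> j (h @ h')) v))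
        \<le> cost (FX V Pl i) (prepend h (outcome (ownX own) ((\<lambda>j h'. \<sigma> j (h @ h'))(i := \<tau>)) v))"
      unfolding L R using NE unfolding \<sigma>'_def \<sigma>_def .
  qed
  show ?thesis using prof spe out by blast
qed


end
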